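(* Let $\mathcal T=(S,\Sigma,\kappa)$ be an STS and $B\in\Sigma$. Suppose there exist $m\ge1$, finite sequences $\mathcal A_j=(A^{(j)}_0,\dots,A^{(j)}_{n_j})\in\Sigma^{n_j+1}$ for $0\le j<m$, and $p>0$ such that: (1) for every $\mu\in\mathrm{Dist}(S)$, $\mathbb P^{\mathcal T}_\mu\big(\bigvee_{0\le j<m}\mathbf{GF}\phi_{\mathcal A_j}\big)=1$; (2) for every $0\le j<m$ and every $\nu\in\mathrm{Dist}(S)$ such that $\nu_{\mathcal A_j}$ is well-defined and $\nu_{\mathcal A_j}(\widetilde B)<1$, we have $\mathbb P^{\mathcal T}_{(\nu_{\mathcal A_j})_{\overline{\widetilde B}}}(\mathbf F B)\ge p$. Then $\mathcal T$ is decisive with respect to $B$.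
   Context: A stochastic transition system (STS) is a triple $\mathcal T=(S,\Sigma,\kappa)$ where $(S,\Sigma)$ is a measurable space and $\kappa:S\times\Sigma\to[0,1]$ is a Markov kernel. $\mathrm{Dist}(S)$ is the set of probability distributions on $(S,\Sigma)$, $\delta_s$ the Dirac distribution at $s$. $\mathrm{Cyl}(A_0,\dots,A_k)=\{s_0s_1\ldots\in S^\omega: s_j\in A_j,\ 0\le j\le k\}$; $\mathbb P^{\mathcal T}_\mu$ is the probability measure on runs (with the $\sigma$-algebra generated by cylinders) induced by initial distribution $\mu$ and kernel $\kappa$. For $\rho=s_0s_1\ldots$, $\rho_{\ge k}=s_ks_{k+1}\ldots$. $\overline C=S\setminus C$; $\mathbf F B$: runs visiting $B$ at some step. $\widetilde B=\{s\in S:\mathbb P^{\mathcal T}_{\delta_s}(\mathbf F B)=0\}$ (assumed measurable). $\mathcal T$ is decisive w.r.t. $B$ if for every $\mu\in\mathrm{Dist}(S)$, $\mathbb P^{\mathcal T}_\mu(\mathbf F B\vee\mathbf F\widetilde B)=1$. For $\mathcal A=(A_0,\dots,A_n)$, $\phi_{\mathcal A}$ is the set of runs with $s_j\in A_j$ for $0\le j\le n$, and $\mathbf{GF}\phi_{\mathcal A}$ the set of runs $\rho$ with $\rho_{\ge k}\in\phi_{\mathcal A}$ for infinitely many $k$. For $\nu$ with $\mathbb P^{\mathcal T}_\nu(\mathrm{Cyl}(A_0,\dots,A_n))>0$, $\nu_{\mathcal A}$ is well-defined and equals $C\mapsto\mathbb P^{\mathcal T}_\nu(\mathrm{Cyl}(A_0,\dots,A_{n-1},A_n\cap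 C))/\mathbb P^{\mathcal T}_\nu(\mathrm{Cyl}(A_0,\dots,A_n))$; for a set $A$ with $\nu(A)>0$, $\nu_A=\nu(\cdot\cap A)/\nu(A)$. *)

theory Defs
  imports "HOL-Probability.Probability"
begin

definition Dist :: "'a measure \<Rightarrow> 'a measure set" where
  "Dist M = {\<mu>. prob_space \<mu> \<and> sets \<mu> = sets M}"

definition markov_kernel :: "'a measure \<Rightarrow> ('a \<Rightarrow> 'a measure) \<Rightarrow> bool" where
  "markov_kernel M \<kappa> \<longleftrightarrow> \<kappa> \<in> M \<rightarrow>\<^sub>M prob_algebra M"

definition cyl :: "'a measure \<Rightarrow> 'a set list \<Rightarrow> 'a stream set" where
  "cyl M As = {\<omega> \<in> streams (space M). \<forall>j < length As. \<omega> !! j \<in> As ! j}"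

fun kint :: "('a \<Rightarrow> 'a measure) \<Rightarrow> 'a set list \<Rightarrow> 'a \<Rightarrow> ennreal" where
  "kint \<kappa> [] x = 1"
| "kint \<kappa> (A # As) x = (\<integral>\<^sup>+ y. indicator A y * kint \<kappa> As y \<partial>\<kappa> x)"

fun cyl_prob :: "('a \<Rightarrow> 'a measure) \<Rightarrow> 'a measure \<Rightarrow> 'a set list \<Rightarrow> ennreal" where
  "cyl_prob \<kappa> \<mu> [] = 1"
| "cyl_prob \<kappa> \<mu> (A # As) = (\<integral>\<^sup>+ x. indicator A x * kint \<kappa> As x \<partial>\<mu>)"

text \<open>P is the run measure induced by mu and kappa: a probability measure on the
  stream sigma-algebra (generated by cylinders) with the prescribed cylinder
  probabilities (this determines P uniquely).\<close>
definition is_path_measure ::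
  "'a measure \<Rightarrow> ('a \<Rightarrow> 'a measure) \<Rightarrow> 'a measure \<Rightarrow> 'a stream measure \<Rightarrow> bool" where
  "is_path_measure M \<kappa> \<mu> P \<longleftrightarrow> prob_space P \<and> sets P = sets (stream_space M) \<and>
     (\<forall>As. As \<noteq> [] \<longrightarrow> set As \<subseteq> sets M \<longrightarrow> emeasure P (cyl M As) = cyl_prob \<kappa> \<mu> As)"

definition Ev :: "'a measure \<Rightarrow> 'a set \<Rightarrow> 'a stream set" where
  "Ev M B = {\<omega> \<in> streams (space M). \<exists>k. \<omega> !! k \<in> B}"

definition Btilde :: "'a measure \<Rightarrow> ('a measure \<Rightarrow> 'a stream measure) \<Rightarrow> 'a set \<Rightarrow> 'a set" where
  "Btilde M P B = {s \<in> space M. measure (P (return M s)) (Ev M B) = 0}"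

definition decisive :: "'a measure \<Rightarrow> ('a measure \<Rightarrow> 'a stream measure) \<Rightarrow> 'a set \<Rightarrow> bool" where
  "decisive M P B \<longleftrightarrow>
     (\<forall>\<mu> \<in> Dist M. measure (P \<mu>) (Ev M B \<union> Ev M (Btilde M P B)) = 1)"

text \<open>GF phi_A: runs whose suffix lies in phi_A infinitely often (phi_A = cyl).\<close>
definition GF :: "'a measure \<Rightarrow> 'a set list \<Rightarrow> 'a stream set" where
  "GF M As = {\<omega> \<in> streams (space M). \<exists>\<^sub>\<infinity> k. sdrop k \<omega> \<in> cyl M As}"

definition cond_seq ::
  "'a measure \<Rightarrow> ('a measure \<Rightarrow> 'a stream measure) \<Rightarrow> 'a measure \<Rightarrow> 'a set list \<Rightarrow> 'a measure" where
  "cond_seq M P \<nu> As = measure_of (space M) (sets M)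
     (\<lambda>C. emeasure (P \<nu>) (cyl M (butlast As @ [last As \<inter> C])) / emeasure (P \<nu>) (cyl M As))"

definition cond_set :: "'a measure \<Rightarrow> 'a measure \<Rightarrow> 'a set \<Rightarrow> 'a measure" where
  "cond_set M \<nu> A = measure_of (space M) (sets M) (\<lambda>C. emeasure \<nu> (C \<inter> A) / emeasure \<nu> A)"

end

theory Submission
  imports Defs
begin


fun NG :: "('a \<Rightarrow> 'a measure) \<Rightarrow> 'a set list \<Rightarrow> ('a \<Rightarrow> ennreal) \<Rightarrow> 'a \<Rightarrow> ennreal" where
  "NG \<kappa> [] h x = h x"
| "NG \<kappa> (A # As) h x = (\<integral>\<^sup>+ y. indicator A y * NG \<kappa> As h y \<partial>\<kappa> x)"

lemma kint_NG: "kint \<kappa> As = NG \<kappa> As (\<lambda>_. 1)"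
  by (induction As) auto

lemma NG_append: "NG \<kappa> (As @ Bs) h = NG \<kappa> As (NG \<kappa> Bs h)"
  by (induction As) (auto intro!: ext)

locale pathsys =
  fixes M :: "'a measure" and \<kappa> :: "'a \<Rightarrow> 'a measure" and P :: "'a measure \<Rightarrow> 'a stream measure"
  assumes kernel: "markov_kernel M \<kappa>" and path: "\<forall>\<mu>\<in>Dist M. is_path_measure M \<kappa> \<mu> (P \<mu>)"
begin

lemma kappa_meas[measurable]: "\<kappa> \<in> M \<rightarrow>\<^sub>M subprob_algebra M"
  using kernel unfolding markov_kernel_def by (rule measurable_prob_algebraD)

lemma kappa_x: assumes "x \<in> space M" shows "prob_space (\<kappa> x)" "sets (\<kappa> x) = sets M" "space (\<kappa> x) = space M"
proof -
  have "\<kappa> x \<in> space (prob_algebra M)" using kernel assms unfolding markov_kernel_def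
    by (rule measurable_space)
  then show "prob_space (\<kappa> x)" "sets (\<kappa> x) = sets M" by (auto simp: space_prob_algebra)
  then show "space (\<kappa> x) = space M" using sets_eq_imp_space_eq by blast
qed

lemma NG_meas[measurable]:
  assumes "set As \<subseteq> sets M" "h \<in> borel_measurable M"
  shows "NG \<kappa> As h \<in> borel_measurable M"
  using assms(1)
proof (induction As)
  case Nil then show ?case using assms(2) by (simp add: NG.simps(1)[abs_def])
next
  case (Cons A As)
  then have [measurable]: "A \<in> sets M" "NG \<kappa> As h \<in> borel_measurable M" by auto
  have "(\<lambda>x. \<integral>\<^sup>+ y. indicator A y * NG \<kappa> As h y \<partial>\<kappa> x) \<in> borel_measurable M"
    by (rule measurable_compose[OF kappa_meas nn_integral_measurable_subprob_algebra]) measurable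
  then show ?case by (simp add: NG.simps(2)[abs_def])
qed

lemma NG_cong:
  assumes "\<And>y. y \<in> space M \<Longrightarrow> f y = g y" "x \<in> space M"
  shows "NG \<kappa> As f x = NG \<kappa> As g x"
  using assms(2)
proof (induction As arbitrary: x)
  case Nil then show ?case using assms(1) by simp
next
  case (Cons A As)
  then show ?case by (auto intro!: nn_integral_cong simp: kappa_x)
qed

lemma NG_cmult:
  assumes "set As \<subseteq> sets M" "h \<in> borel_measurable M" "x \<in> space M"
  shows "NG \<kappa> As (\<lambda>y. c * h y) x = c * NG \<kappa> As h x"
  using assms(1,3)
proof (induction As arbitrary: x)
  case Nil then show ?case by simp
next
  case (Cons A As)
  then have [measurable]: "A \<in> sets M" by auto
  have [measurable]: "NG \<kappa> As h \<in> borel_measurable M" using NG_meas[of As h] Cons assms(2) by auto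
  have "(\<lambda>y. indicator A y * NG \<kappa> As h y) \<in> borel_measurable M" by measurable
  then have m: "(\<lambda>y. indicator A y * NG \<kappa> As h y) \<in> borel_measurable (\<kappa> x)"
    by (simp add: measurable_cong_sets[OF kappa_x(2)[OF Cons(3)] refl])
  have "NG \<kappa> (A # As) (\<lambda>y. c * h y) x = (\<integral>\<^sup>+ y. c * (indicator A y * NG \<kappa> As h y) \<partial>\<kappa> x)"
    using Cons by (auto intro!: nn_integral_cong simp: kappa_x mult.left_commute)
  also have "\<dots> = c * NG \<kappa> (A # As) h x"
    using m by (simp add: nn_integral_cmult)
  finally show ?case .
qed

lemma NG_add:
  assumes "set As \<subseteq> sets M" "f \<in> borel_measurable M" "g \<in> borel_measurable M" "x \<in> space M"
  shows "NG \<kappa> As (\<lambda>y. f y + g y) x = NG \<kappa> As f x + NG \<kappa> As g x"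
  using assms(1,4)
proof (induction As arbitrary: x)
  case Nil then show ?case by simp
next
  case (Cons A As)
  then have [measurable]: "A \<in> sets M" by auto
  have [measurable]: "NG \<kappa> As f \<in> borel_measurable M" "NG \<kappa> As g \<in> borel_measurable M" using NG_meas[of As] Cons assms(2,3) by auto
  have "(\<lambda>y. indicator A y * NG \<kappa> As f y) \<in> borel_measurable M" "(\<lambda>y. indicator A y * NG \<kappa> As g y) \<in> borel_measurable M" by measurable
  then have m: "(\<lambda>y. indicator A y * NG \<kappa> As f y) \<in> borel_measurable (\<kappa> x)" "(\<lambda>y. indicator A y * NG \<kappa> As g y) \<in> borel_measurable (\<kappa> x)"
    by (simp_all add: measurable_cong_sets[OF kappa_x(2)[OF Cons(3)] refl])
  have "NG \<kappa> (A # As) (\<lambda>y. f y + g y) x = (\<integral>\<^sup>+ y. indicator A y * NG \<kappa> As f y + indicator A y * NG \<kappa> As g y \<partial>\<kappa> x)"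
    using Cons by (auto intro!: nn_integral_cong simp: kappa_x distrib_left)
  also have "\<dots> = NG \<kappa> (A # As) f x + NG \<kappa> (A # As) g x"
    using m by (simp add: nn_integral_add)
  finally show ?case .
qed

lemma NG_SUP:
  assumes "set As \<subseteq> sets M" "\<And>i. U i \<in> borel_measurable M" "incseq U" "x \<in> space M"
  shows "NG \<kappa> As (SUP i. U i) x = (SUP i. NG \<kappa> As (U i) x)" "incseq (\<lambda>i. NG \<kappa> As (U i) x)"
proof -
  have "NG \<kappa> As (SUP i. U i) x = (SUP i. NG \<kappa> As (U i) x) \<and> incseq (\<lambda>i. NG \<kappa> As (U i) x)"
  using assms(1,4)
  proof (induction As arbitrary: x)
    case Nil then show ?case using assms(3) by (auto simp: incseq_def le_fun_def image_comp)
  next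
    case (Cons A As)
    then have [measurable]: "A \<in> sets M" by auto
    have [measurable]: "\<And>i. NG \<kappa> As (U i) \<in> borel_measurable M" using NG_meas[of As] Cons assms(2) by auto
    have "\<And>i. (\<lambda>y. indicator A y * NG \<kappa> As (U i) y) \<in> borel_measurable M" by measurable
    then have m: "\<And>i. (\<lambda>y. indicator A y * NG \<kappa> As (U i) y) \<in> borel_measurable (\<kappa> x)"
      by (simp add: measurable_cong_sets[OF kappa_x(2)[OF Cons(3)] refl])
    have inc: "incseq (\<lambda>i y. indicator A y * NG \<kappa> As (U i) y)"
    proof -
      { fix i j :: nat and y assume "i \<le> j"
        have "indicator A y * NG \<kappa> As (U i) y \<le> indicator A y * NG \<kappa> As (U j) y"
        proof (cases "y \<in> space M")
          case True then show ?thesis using Cons \<open>i\<le>j\<close> by (auto intro!: mult_left_mono simp: incseq_def)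
        next
          case False then show ?thesis using sets.sets_into_space[OF \<open>A \<in> sets M\<close>] by (auto simp: indicator_def)
        qed }
      then show ?thesis by (auto simp: incseq_def le_fun_def)
    qed
    have eq1: "\<And>y. y \<in> space (\<kappa> x) \<Longrightarrow> indicator A y * NG \<kappa> As (SUP i. U i) y = (SUP i. indicator A y * NG \<kappa> As (U i) y)"
    proof -
      fix y assume "y \<in> space (\<kappa> x)"
      then have "y \<in> space M" using kappa_x Cons by auto
      then have "NG \<kappa> As (SUP i. U i) y = (SUP i. NG \<kappa> As (U i) y)" using Cons.IH[of y] Cons.prems \<open>y \<in> space M\<close> by (auto simp: Sup_fun_def image_comp)
      then show "indicator A y * NG \<kappa> As (SUP i. U i) y = (SUP i. indicator A y * NG \<kappa> As (U i) y)"
        by (simp add: SUP_mult_left_ennreal)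
    qed
    have "NG \<kappa> (A # As) (SUP i. U i) x = (\<integral>\<^sup>+ y. (SUP i. indicator A y * NG \<kappa> As (U i) y) \<partial>\<kappa> x)"
      using eq1 by (simp del: NG.simps(1) cong: nn_integral_cong)
    also have "\<dots> = (SUP i. NG \<kappa> (A # As) (U i) x)"
      using nn_integral_monotone_convergence_SUP[OF inc m] by simp
    finally have 1: "NG \<kappa> (A # As) (SUP i. U i) x = (SUP i. NG \<kappa> (A # As) (U i) x)" .
    have "incseq (\<lambda>i. NG \<kappa> (A # As) (U i) x)" using inc
      by (auto simp: incseq_def le_fun_def intro!: nn_integral_mono)
    with 1 show ?case by blast
  qed
  then show "NG \<kappa> As (SUP i. U i) x = (SUP i. NG \<kappa> As (U i) x)" "incseq (\<lambda>i. NG \<kappa> As (U i) x)" by auto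
qed

end


fun capl :: "'a set list \<Rightarrow> 'a set \<Rightarrow> 'a set list" where
  "capl [] C = []"
| "capl [A] C = [A \<inter> C]"
| "capl (A # B # As) C = A # capl (B # As) C"

lemma length_capl[simp]: "length (capl L C) = length L"
  by (induction L C rule: capl.induct) auto

lemma nth_capl: "j < length L \<Longrightarrow> capl L C ! j = (if j = length L - 1 then L ! j \<inter> C else L ! j)"
proof (induction L C arbitrary: j rule: capl.induct)
  case (3 A B As C)
  then show ?case by (cases j) auto
qed auto

lemma set_capl: "set L \<subseteq> sets M \<Longrightarrow> C \<in> sets M \<Longrightarrow> set (capl L C) \<subseteq> sets M"
  by (induction L C rule: capl.induct) auto

definition CK :: "('a \<Rightarrow> 'a measure) \<Rightarrow> 'a set list \<Rightarrow> ('a \<Rightarrow> ennreal) \<Rightarrow> 'a \<Rightarrow> ennreal" where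
  "CK \<kappa> L h x = (case L of [] \<Rightarrow> h x | A # As \<Rightarrow> indicator A x * NG \<kappa> As h x)"

lemma CK_Cons: "CK \<kappa> (A # As) h x = indicator A x * NG \<kappa> As h x"
  by (simp add: CK_def)

lemma cyl_prob_CK: "cyl_prob \<kappa> \<mu> (A # As) = (\<integral>\<^sup>+ x. CK \<kappa> (A # As) (\<lambda>_. 1) x \<partial>\<mu>)"
  by (simp add: CK_def kint_NG)

lemma CK_capl: "L \<noteq> [] \<Longrightarrow> CK \<kappa> L (\<lambda>x. indicator C x * g x) x = CK \<kappa> (capl L C) g x"
proof (induction L C arbitrary: x rule: capl.induct)
  case (2 A C) then show ?case by (simp add: CK_def indicator_inter_arith mult.assoc)
next
  case (3 A B As C)
  obtain B' Bs' where e: "capl (B # As) C = B' # Bs'"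
    by (cases "capl (B # As) C") (auto dest: arg_cong[of _ _ length])
  have "\<And>y. indicator B y * NG \<kappa> As (\<lambda>x. indicator C x * g x) y = indicator B' y * NG \<kappa> Bs' g y"
    using 3[of ] e by (simp add: CK_def)
  then show ?case using e by (simp add: CK_def)
qed auto

lemma CK_append: "L \<noteq> [] \<Longrightarrow> CK \<kappa> L (NG \<kappa> As g) = CK \<kappa> (L @ As) g"
  by (cases L) (auto simp: CK_def NG_append fun_eq_iff)

lemma cyl_scyl: "cyl M As = scylinder (space M) As"
proof (induction As)
  case Nil then show ?case by (simp add: cyl_def)
next
  case (Cons A As)
  have "\<omega> \<in> cyl M (A # As) \<longleftrightarrow> \<omega> \<in> scylinder (space M) (A # As)" for \<omega>
  proof -
    have "(\<forall>j<Suc (length As). \<omega> !! j \<in> (A # As) ! j) \<longleftrightarrow> shd \<omega> \<in> A \<and> (\<forall>j<length As. stl \<omega> !! j \<in> As ! j)"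
      by (auto simp: less_Suc_eq_0_disj)
    then show ?thesis using Cons by (auto simp: cyl_def streams_stl)
  qed
  then show ?case by blast
qed

lemma cyl_sets: "set As \<subseteq> sets M \<Longrightarrow> cyl M As \<in> sets (stream_space M)"
  by (simp add: cyl_scyl sets_scylinder subset_iff)

lemma cyl_capl: "L \<noteq> [] \<Longrightarrow> cyl M (capl L C) = {\<omega> \<in> cyl M L. \<omega> !! (length L - 1) \<in> C}"
  by (auto simp: cyl_def nth_capl split: if_splits)

lemma cyl_capl_append: "L \<noteq> [] \<Longrightarrow> cyl M (capl L A @ As) =
   {\<omega> \<in> cyl M L. \<forall>l < length (A # As). \<omega> !! (length L - 1 + l) \<in> (A # As) ! l}"
proof -
  assume L: "L \<noteq> []"
  define n where "n = length L"
  have n: "n \<ge> 1" using L by (simp add: n_def Suc_le_eq)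
  have e1: "(\<forall>j<length (capl L A @ As). \<omega> !! j \<in> (capl L A @ As) ! j) \<longleftrightarrow>
    (\<forall>j<n. \<omega> !! j \<in> L ! j) \<and> \<omega> !! (n - 1) \<in> A \<and> (\<forall>l<length As. \<omega> !! (n + l) \<in> As ! l)" for \<omega>
  proof safe
    assume a: "\<forall>j<length (capl L A @ As). \<omega> !! j \<in> (capl L A @ As) ! j"
    show "\<omega> !! j \<in> L ! j" if "j < n" for j
      using a[rule_format, of j] that by (auto simp: nth_append nth_capl n_def split: if_splits)
    show "\<omega> !! (n - 1) \<in> A"
    proof -
      have lt: "n - 1 < length L" using n by (simp add: n_def)
      then have "n - 1 < length (capl L A @ As)" by simp
      then have "\<omega> !! (n - 1) \<in> capl L A ! (n - 1)" using a[rule_format, of "n - 1"] lt by (simp add: nth_append)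
      then show ?thesis using nth_capl[OF lt, of A] by (simp add: n_def)
    qed
    show "\<omega> !! (n + l) \<in> As ! l" if "l < length As" for l
      using a[rule_format, of "n + l"] that by (auto simp: nth_append n_def)
  next
    fix j assume a1: "\<forall>j<n. \<omega> !! j \<in> L ! j" and a2: "\<omega> !! (n - 1) \<in> A"
      and a3: "\<forall>l<length As. \<omega> !! (n + l) \<in> As ! l" and j: "j < length (capl L A @ As)"
    show "\<omega> !! j \<in> (capl L A @ As) ! j"
    proof (cases "j < n")
      case True then show ?thesis using a1 a2 by (auto simp: nth_append nth_capl n_def)
    next
      case False then have "j = n + (j - n)" "j - n < length As" using j by (auto simp: n_def)
      then show ?thesis using a3[rule_format, of "j - n"] False by (auto simp: nth_append n_def)
    qed
  qed
  have e2: "(\<forall>l < length (A # As). \<omega> !! (n - 1 + l) \<in> (A # As) ! l) \<longleftrightarrow>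
     \<omega> !! (n - 1) \<in> A \<and> (\<forall>l<length As. \<omega> !! (n + l) \<in> As ! l)" for \<omega>
  proof -
    have "(\<forall>l < Suc (length As). \<omega> !! (n - 1 + l) \<in> (A # As) ! l) \<longleftrightarrow>
       \<omega> !! (n - 1) \<in> A \<and> (\<forall>l<length As. \<omega> !! (n - 1 + Suc l) \<in> As ! l)"
      by (auto simp: less_Suc_eq_0_disj)
    moreover have "\<And>l. n - 1 + Suc l = n + l" using n by auto
    ultimately show ?thesis by (simp del: snth.simps)
  qed
  show ?thesis unfolding cyl_def using e1 e2 by (auto simp: n_def)
qed

context pathsys
begin

lemma Pmu: assumes "\<mu> \<in> Dist M"
  shows "prob_space (P \<mu>)" "sets (P \<mu>) = sets (stream_space M)" "space (P \<mu>) = streams (space M)"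
    "\<And>As. As \<noteq> [] \<Longrightarrow> set As \<subseteq> sets M \<Longrightarrow> emeasure (P \<mu>) (cyl M As) = cyl_prob \<kappa> \<mu> As"
proof -
  show 1: "prob_space (P \<mu>)" "sets (P \<mu>) = sets (stream_space M)"
    "\<And>As. As \<noteq> [] \<Longrightarrow> set As \<subseteq> sets M \<Longrightarrow> emeasure (P \<mu>) (cyl M As) = cyl_prob \<kappa> \<mu> As"
    using path assms unfolding is_path_measure_def by auto
  show "space (P \<mu>) = streams (space M)"
    using sets_eq_imp_space_eq[OF 1(2)] by (simp add: space_stream_space)
qed

lemma Dist_D: assumes "\<mu> \<in> Dist M" shows "prob_space \<mu>" "sets \<mu> = sets M" "space \<mu> = space M"
  using assms unfolding Dist_def by (auto dest: sets_eq_imp_space_eq)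

lemma path_unique:
  assumes "is_path_measure M \<kappa> \<mu> Q1" "is_path_measure M \<kappa> \<mu> Q2"
  shows "Q1 = Q2"
proof (rule stream_space_eq_scylinder[where G="sets M" and C="{space M}" and S=M])
  show "prob_space Q1" "prob_space Q2" "sets Q1 = sets (stream_space M)" "sets Q2 = sets (stream_space M)"
    using assms by (auto simp: is_path_measure_def)
  show "Int_stable (sets M)" by (auto simp: Int_stable_def)
  show "sets M = sets (sigma (space M) (sets M))" by simp
  show "countable {space M}" "{space M} \<subseteq> sets M" "\<Union>{space M} = space M" "sets M \<subseteq> Pow (space M)"
    by (auto dest: sets.sets_into_space)
  fix xs :: "'a set list" assume "xs \<noteq> []" "xs \<in> lists (sets M)"
  then show "emeasure Q1 (scylinder (space M) xs) = emeasure Q2 (scylinder (space M) xs)"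
    using assms by (auto simp: is_path_measure_def cyl_scyl[symmetric] in_lists_conv_set subset_iff)
qed

lemma CK_meas[measurable]:
  assumes "set L \<subseteq> sets M" "h \<in> borel_measurable M"
  shows "CK \<kappa> L h \<in> borel_measurable M"
proof (cases L)
  case Nil then show ?thesis using assms by (simp add: CK_def[abs_def])
next
  case (Cons A As)
  then have [measurable]: "A \<in> sets M" "NG \<kappa> As h \<in> borel_measurable M" using assms NG_meas by auto
  show ?thesis using Cons by (simp add: CK_Cons[abs_def])
qed


end

context pathsys begin
lemma FD:
  assumes mu: "\<mu> \<in> Dist M" and L: "L \<noteq> []" "set L \<subseteq> sets M" and h: "h \<in> borel_measurable M"
  shows "(\<integral>\<^sup>+\<omega>. indicator (cyl M L) \<omega> * h (\<omega> !! (length L - 1)) \<partial>P \<mu>) = (\<integral>\<^sup>+x. CK \<kappa> L h x \<partial>\<mu>)"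
  using h
proof (induction rule: borel_measurable_induct)
  note PM = Pmu[OF mu] and DM = Dist_D[OF mu]
  have cylm[measurable]: "cyl M L \<in> sets (P \<mu>)" using cyl_sets L PM by auto
  have cyls[measurable]: "cyl M L \<in> sets (stream_space M)" using cyl_sets L by auto
  have mf: "(\<lambda>\<omega>. indicator (cyl M L) \<omega> * u (\<omega> !! (length L - 1))) \<in> borel_measurable (stream_space M)"
    if "u \<in> borel_measurable M" for u :: "'a \<Rightarrow> ennreal"
    by (intro borel_measurable_times_ennreal borel_measurable_indicator cyls measurable_compose[OF measurable_snth that])
  {
  case (cong f g)
  have "(\<integral>\<^sup>+\<omega>. indicator (cyl M L) \<omega> * f (\<omega> !! (length L - 1)) \<partial>P \<mu>) =
        (\<integral>\<^sup>+\<omega>. indicator (cyl M L) \<omega> * g (\<omega> !! (length L - 1)) \<partial>P \<mu>)"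
    using cong by (intro nn_integral_cong) (auto simp: PM snth_in)
  also have "\<dots> = (\<integral>\<^sup>+x. CK \<kappa> L g x \<partial>\<mu>)" by fact
  also have "\<dots> = (\<integral>\<^sup>+x. CK \<kappa> L f x \<partial>\<mu>)"
  proof (intro nn_integral_cong)
    fix x assume "x \<in> space \<mu>"
    then have x: "x \<in> space M" using DM by simp
    obtain A As where e: "L = A # As" using L by (cases L) auto
    have "NG \<kappa> As g x = NG \<kappa> As f x" using NG_cong[of g f x As] cong(3) x by metis
    then show "CK \<kappa> L g x = CK \<kappa> L f x" by (simp add: e CK_Cons)
  qed
  finally show ?case .
next
  case (set C)
  have "(\<integral>\<^sup>+\<omega>. indicator (cyl M L) \<omega> * indicator C (\<omega> !! (length L - 1)) \<partial>P \<mu>) =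
        (\<integral>\<^sup>+\<omega>. indicator (cyl M (capl L C)) \<omega> \<partial>P \<mu>)"
    using L by (intro nn_integral_cong) (auto simp: cyl_capl indicator_def)
  also have "\<dots> = emeasure (P \<mu>) (cyl M (capl L C))"
    using cyl_sets[OF set_capl[OF L(2) set]] PM by simp
  also have "\<dots> = cyl_prob \<kappa> \<mu> (capl L C)"
    using L set by (intro PM(4)) (auto simp: set_capl dest: arg_cong[of _ _ length])
  also have "\<dots> = (\<integral>\<^sup>+x. CK \<kappa> (capl L C) (\<lambda>_. 1) x \<partial>\<mu>)"
  proof -
    obtain a l where e: "capl L C = a # l" using L by (cases "capl L C") (auto dest: arg_cong[of _ _ length])
    show ?thesis unfolding e by (rule cyl_prob_CK)
  qed
  also have "\<dots> = (\<integral>\<^sup>+x. CK \<kappa> L (indicator C) x \<partial>\<mu>)"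
    using CK_capl[OF L(1), where C=C and g="\<lambda>_. 1" and \<kappa>=\<kappa>] by simp
  finally show ?case .
next
  case (mult u c)
  note [measurable] = mult(2)
  have [measurable]: "CK \<kappa> L u \<in> borel_measurable \<mu>"
    unfolding measurable_cong_sets[OF DM(2) refl] by (rule CK_meas[OF L(2) mult(2)])
  have "(\<integral>\<^sup>+\<omega>. indicator (cyl M L) \<omega> * (c * u (\<omega> !! (length L - 1))) \<partial>P \<mu>) =
        c * (\<integral>\<^sup>+\<omega>. indicator (cyl M L) \<omega> * u (\<omega> !! (length L - 1)) \<partial>P \<mu>)"
    by (subst nn_integral_cmult[symmetric]) (use mf[OF mult(2)] in \<open>auto simp: PM measurable_cong_sets[OF PM(2) refl] mult_ac\<close>)
  also have "\<dots> = c * (\<integral>\<^sup>+x. CK \<kappa> L u x \<partial>\<mu>)" using mult by simp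
  also have "\<dots> = (\<integral>\<^sup>+x. CK \<kappa> L (\<lambda>x. c * u x) x \<partial>\<mu>)"
    using L mult(2) by (subst nn_integral_cmult[symmetric]) (auto intro!: nn_integral_cong simp: DM CK_def NG_cmult mult_ac split: list.splits)
  finally show ?case .
next
  case (add u v)
  note [measurable] = \<open>u \<in> borel_measurable M\<close> \<open>v \<in> borel_measurable M\<close>
  have [measurable]: "CK \<kappa> L u \<in> borel_measurable \<mu>" "CK \<kappa> L v \<in> borel_measurable \<mu>"
    unfolding measurable_cong_sets[OF DM(2) refl] using CK_meas[OF L(2)] add by auto
  have "(\<integral>\<^sup>+\<omega>. indicator (cyl M L) \<omega> * (v (\<omega> !! (length L - 1)) + u (\<omega> !! (length L - 1))) \<partial>P \<mu>) =
        (\<integral>\<^sup>+\<omega>. indicator (cyl M L) \<omega> * v (\<omega> !! (length L - 1)) \<partial>P \<mu>) + (\<integral>\<^sup>+\<omega>. indicator (cyl M L) \<omega> * u (\<omega> !! (length L - 1)) \<partial>P \<mu>)"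
    by (subst nn_integral_add[symmetric]) (use mf[OF \<open>u \<in> borel_measurable M\<close>] mf[OF \<open>v \<in> borel_measurable M\<close>] in \<open>auto simp: PM measurable_cong_sets[OF PM(2) refl] distrib_left\<close>)
  also have "\<dots> = (\<integral>\<^sup>+x. CK \<kappa> L v x \<partial>\<mu>) + (\<integral>\<^sup>+x. CK \<kappa> L u x \<partial>\<mu>)" using add by simp
  also have "\<dots> = (\<integral>\<^sup>+x. CK \<kappa> L (\<lambda>x. v x + u x) x \<partial>\<mu>)"
    using L add by (subst nn_integral_add[symmetric]) (auto intro!: nn_integral_cong simp: DM CK_def NG_add distrib_left split: list.splits)
  finally show ?case .
next
  case (seq U)
  note [measurable] = seq(1)
  have [measurable]: "\<And>i. CK \<kappa> L (U i) \<in> borel_measurable \<mu>"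
    unfolding measurable_cong_sets[OF DM(2) refl] using CK_meas[OF L(2)] seq by auto
  have inc1: "incseq (\<lambda>i \<omega>. indicator (cyl M L) \<omega> * U i (\<omega> !! (length L - 1)))"
    using \<open>incseq U\<close> by (auto simp: incseq_def le_fun_def intro!: mult_left_mono)
  have "(\<integral>\<^sup>+\<omega>. indicator (cyl M L) \<omega> * (SUP i. U i) (\<omega> !! (length L - 1)) \<partial>P \<mu>) =
        (\<integral>\<^sup>+\<omega>. (SUP i. indicator (cyl M L) \<omega> * U i (\<omega> !! (length L - 1))) \<partial>P \<mu>)"
    by (simp add: SUP_mult_left_ennreal image_comp)
  also have "\<dots> = (SUP i. \<integral>\<^sup>+\<omega>. indicator (cyl M L) \<omega> * U i (\<omega> !! (length L - 1)) \<partial>P \<mu>)"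
    using inc1 mf[OF seq(1)] by (subst nn_integral_monotone_convergence_SUP) (auto simp: PM measurable_cong_sets[OF PM(2) refl])
  also have "\<dots> = (SUP i. \<integral>\<^sup>+x. CK \<kappa> L (U i) x \<partial>\<mu>)" using seq by simp
  also have "\<dots> = (\<integral>\<^sup>+x. (SUP i. CK \<kappa> L (U i) x) \<partial>\<mu>)"
  proof (subst nn_integral_monotone_convergence_SUP)
    show "incseq (\<lambda>i. CK \<kappa> L (U i))"
    proof (cases L)
      case (Cons A As)
      have "\<And>x. incseq (\<lambda>i. CK \<kappa> L (U i) x)"
      proof -
        fix x show "incseq (\<lambda>i. CK \<kappa> L (U i) x)"
        proof (cases "x \<in> space M")
          case True then show ?thesis using NG_SUP(2)[of As U x] seq L Cons
            by (auto simp: CK_def incseq_def intro!: mult_left_mono)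
        next
          case False then have "x \<notin> A" using L Cons sets.sets_into_space by auto
          then show ?thesis using Cons by (simp add: CK_def incseq_def)
        qed
      qed
      then show ?thesis by (auto simp: incseq_def le_fun_def)
    qed (use L in auto)
  qed auto
  also have "\<dots> = (\<integral>\<^sup>+x. CK \<kappa> L (SUP i. U i) x \<partial>\<mu>)"
  proof (intro nn_integral_cong)
    fix x assume "x \<in> space \<mu>"
    then have x: "x \<in> space M" using DM by simp
    obtain A As where Cons: "L = A # As" using L by (cases L) auto
    show "(SUP i. CK \<kappa> L (U i) x) = CK \<kappa> L (SUP i. U i) x"
      using NG_SUP(1)[of As U x] seq L Cons x by (simp add: CK_def SUP_mult_left_ennreal image_comp)
  qed
  finally show ?case .
  }
qed

end


definition Gen :: "'a measure \<Rightarrow> nat \<Rightarrow> 'a stream set set" where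
  "Gen M k = {cyl M L | L. length L = Suc k \<and> set L \<subseteq> sets M}"

definition Fk :: "'a measure \<Rightarrow> nat \<Rightarrow> 'a stream set set" where
  "Fk M k = sigma_sets (streams (space M)) (Gen M k)"

definition scyl :: "'a measure \<Rightarrow> nat \<Rightarrow> 'a set list \<Rightarrow> 'a stream set" where
  "scyl M k As = {\<omega> \<in> streams (space M). \<forall>l<length As. \<omega> !! (k + l) \<in> As ! l}"

lemma cyl_sub: "cyl M L \<subseteq> streams (space M)" by (auto simp: cyl_def)

lemma Gen_Pow: "Gen M k \<subseteq> Pow (streams (space M))"
  using cyl_sub by (auto simp: Gen_def)

lemma Gen_sets: "Gen M k \<subseteq> sets (stream_space M)"
  using cyl_sets by (auto simp: Gen_def)

lemma Fk_sets: "Fk M k \<subseteq> sets (stream_space M)"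
  unfolding Fk_def using sets.sigma_sets_subset[OF Gen_sets, of M k] by (simp add: space_stream_space)

lemma Omega_Gen: "streams (space M) \<in> Gen M k"
proof -
  have "streams (space M) = cyl M (replicate (Suc k) (space M))"
    by (auto simp: cyl_def snth_in simp del: replicate.simps)
  then show ?thesis unfolding Gen_def by (intro CollectI exI[of _ "replicate (Suc k) (space M)"]) auto
qed

lemma Gen_Int_stable: "Int_stable (Gen M k)"
proof (rule Int_stableI)
  fix a b assume "a \<in> Gen M k" "b \<in> Gen M k"
  then obtain L1 L2 where L: "a = cyl M L1" "b = cyl M L2" "length L1 = Suc k" "length L2 = Suc k"
    "set L1 \<subseteq> sets M" "set L2 \<subseteq> sets M" by (auto simp: Gen_def)
  let ?L = "map2 (\<inter>) L1 L2"
  have "a \<inter> b = cyl M ?L" using L by (auto simp: cyl_def)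
  moreover have "set ?L \<subseteq> sets M"
  proof
    fix x assume "x \<in> set ?L"
    then obtain u v where uv: "(u, v) \<in> set (zip L1 L2)" "x = u \<inter> v" by auto
    then have "u \<in> set L1" "v \<in> set L2" by (auto dest: set_zip_leftD set_zip_rightD)
    then show "x \<in> sets M" using L uv by auto
  qed
  moreover have "length ?L = Suc k" using L by simp
  ultimately show "a \<inter> b \<in> Gen M k" using L unfolding Gen_def by blast
qed

lemma scyl_sdrop: "sdrop k -` cyl M As \<inter> streams (space M) = scyl M k As"
  by (auto simp: cyl_def scyl_def streams_iff_snth sdrop_snth)

lemma scyl_sets: "set As \<subseteq> sets M \<Longrightarrow> scyl M k As \<in> sets (stream_space M)"
proof -
  assume "set As \<subseteq> sets M"
  then have "cyl M As \<in> sets (stream_space M)" by (rule cyl_sets)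
  then have "sdrop k -` cyl M As \<inter> space (stream_space M) \<in> sets (stream_space M)"
    using measurable_sdrop by (rule measurable_sets[rotated])
  then show ?thesis by (simp add: scyl_sdrop space_stream_space)
qed

context pathsys
begin

lemma MPcyl:
  assumes mu: "\<mu> \<in> Dist M" and G: "G \<in> Fk M k" and A: "A0 \<in> sets M" "set As \<subseteq> sets M"
  shows "emeasure (P \<mu>) (G \<inter> scyl M k (A0 # As)) =
     (\<integral>\<^sup>+\<omega>. indicator G \<omega> * (indicator A0 (\<omega> !! k) * kint \<kappa> As (\<omega> !! k)) \<partial>P \<mu>)"
  using Gen_Int_stable Gen_Pow G[unfolded Fk_def]
proof (induction rule: sigma_sets_induct_disjoint)
  note PM = Pmu[OF mu] and DM = Dist_D[OF mu]
  let ?Z = "scyl M k (A0 # As)"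
  let ?f = "\<lambda>\<omega>. indicator A0 (\<omega> !! k) * kint \<kappa> As (\<omega> !! k) :: ennreal"
  let ?h = "\<lambda>x. indicator A0 x * kint \<kappa> As x :: ennreal"
  have hm[measurable]: "?h \<in> borel_measurable M"
    using NG_meas[OF A(2), of "\<lambda>_. 1"] A(1) by (simp add: kint_NG)
  have fm[measurable]: "?f \<in> borel_measurable (stream_space M)"
    using measurable_compose[OF measurable_snth hm] by simp
  have Zm[measurable]: "?Z \<in> sets (stream_space M)" using scyl_sets[of "A0 # As" M k] A by auto
  have Fm: "X \<in> sets (stream_space M)" if "X \<in> sigma_sets (streams (space M)) (Gen M k)" for X
    using Fk_sets that by (auto simp: Fk_def)
  have bas: "emeasure (P \<mu>) (X \<inter> ?Z) = (\<integral>\<^sup>+\<omega>. indicator X \<omega> * ?f \<omega> \<partial>P \<mu>)" if XG: "X \<in> Gen M k" for X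
  proof -
    obtain L where L: "X = cyl M L" "length L = Suc k" "set L \<subseteq> sets M" using XG unfolding Gen_def by blast
    have Lne: "L \<noteq> []" using L by auto
    have "X \<inter> ?Z = cyl M (capl L A0 @ As)"
      using L cyl_capl_append[OF Lne, where M=M and A=A0 and As=As] cyl_sub[of M L] by (auto simp: scyl_def)
    then have "emeasure (P \<mu>) (X \<inter> ?Z) = cyl_prob \<kappa> \<mu> (capl L A0 @ As)"
    proof -
      have sc: "set (capl L A0 @ As) \<subseteq> sets M" using set_capl[OF L(3) A(1)] A(2) by auto
      have ne: "capl L A0 @ As \<noteq> []" using Lne by (auto dest: arg_cong[of _ _ length])
      show ?thesis using PM(4)[OF ne sc] \<open>X \<inter> ?Z = _\<close> by simp
    qed
    also have "\<dots> = (\<integral>\<^sup>+x. CK \<kappa> (capl L A0 @ As) (\<lambda>_. 1) x \<partial>\<mu>)"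
    proof -
      obtain a l where e: "capl L A0 @ As = a # l" using Lne
        by (cases "capl L A0 @ As") (auto dest: arg_cong[of _ _ length])
      show ?thesis unfolding e by (rule cyl_prob_CK)
    qed
    also have "\<dots> = (\<integral>\<^sup>+x. CK \<kappa> L ?h x \<partial>\<mu>)"
    proof -
      have cne: "capl L A0 \<noteq> []" using Lne by (auto dest: arg_cong[of _ _ length])
      have "CK \<kappa> L ?h = CK \<kappa> (capl L A0) (kint \<kappa> As)" using CK_capl[OF Lne, where \<kappa>=\<kappa> and C=A0 and g="kint \<kappa> As"]
        by (simp add: fun_eq_iff)
      also have "\<dots> = CK \<kappa> (capl L A0 @ As) (\<lambda>_. 1)" using CK_append[OF cne] by (simp add: kint_NG)
      finally show ?thesis by simp
    qed
    also have "\<dots> = (\<integral>\<^sup>+\<omega>. indicator (cyl M L) \<omega> * ?h (\<omega> !! (length L - 1)) \<partial>P \<mu>)"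
      using FD[OF mu Lne L(3) hm] by simp
    finally show ?thesis using L by simp
  qed
  {
    case (basic X) then show ?case using bas by blast
  next
    case empty then show ?case by simp
  next
    case (compl X)
    let ?O = "streams (space M)"
    have Xm: "X \<in> sets (stream_space M)" using Fm compl by auto
    have e1: "emeasure (P \<mu>) ((?O - X) \<inter> ?Z) + emeasure (P \<mu>) (X \<inter> ?Z) = emeasure (P \<mu>) (?O \<inter> ?Z)"
    proof -
      have "(?O - X) \<inter> ?Z \<union> X \<inter> ?Z = ?O \<inter> ?Z" using Xm sets.sets_into_space[OF Xm] by (auto simp: space_stream_space)
      moreover have "emeasure (P \<mu>) ((?O - X) \<inter> ?Z \<union> X \<inter> ?Z) = emeasure (P \<mu>) ((?O - X) \<inter> ?Z) + emeasure (P \<mu>) (X \<inter> ?Z)"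
        using Xm Zm by (intro plus_emeasure[symmetric]) (auto simp: PM intro!: sets.Int sets.Diff)
      ultimately show ?thesis by simp
    qed
    have e2: "(\<integral>\<^sup>+\<omega>. indicator (?O - X) \<omega> * ?f \<omega> \<partial>P \<mu>) + (\<integral>\<^sup>+\<omega>. indicator X \<omega> * ?f \<omega> \<partial>P \<mu>) =
       (\<integral>\<^sup>+\<omega>. indicator ?O \<omega> * ?f \<omega> \<partial>P \<mu>)"
    proof -
      have "(\<integral>\<^sup>+\<omega>. indicator (?O - X) \<omega> * ?f \<omega> \<partial>P \<mu>) + (\<integral>\<^sup>+\<omega>. indicator X \<omega> * ?f \<omega> \<partial>P \<mu>) =
        (\<integral>\<^sup>+\<omega>. indicator (?O - X) \<omega> * ?f \<omega> + indicator X \<omega> * ?f \<omega> \<partial>P \<mu>)"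
      proof -
        have m1: "(\<lambda>\<omega>. indicator (?O - X) \<omega> * ?f \<omega>) \<in> borel_measurable (stream_space M)"
          by (intro borel_measurable_times_ennreal borel_measurable_indicator fm sets.Diff streams_stream_space Xm)
        have m2: "(\<lambda>\<omega>. indicator X \<omega> * ?f \<omega>) \<in> borel_measurable (stream_space M)"
          by (intro borel_measurable_times_ennreal borel_measurable_indicator fm Xm)
        show ?thesis using m1 m2 by (intro nn_integral_add[symmetric]) (auto simp: measurable_cong_sets[OF PM(2) refl])
      qed
      also have "\<dots> = (\<integral>\<^sup>+\<omega>. indicator ?O \<omega> * ?f \<omega> \<partial>P \<mu>)"
        using sets.sets_into_space[OF Xm] by (intro nn_integral_cong) (auto simp: indicator_def space_stream_space)
      finally show ?thesis .
    qed
    have fin: "emeasure (P \<mu>) (X \<inter> ?Z) \<noteq> \<infinity>"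
      using finite_measure.emeasure_finite[OF prob_space.axioms(1)[OF PM(1)]] by simp
    have "emeasure (P \<mu>) (?O \<inter> ?Z) = (\<integral>\<^sup>+\<omega>. indicator ?O \<omega> * ?f \<omega> \<partial>P \<mu>)"
      using bas[OF Omega_Gen] .
    then have "emeasure (P \<mu>) ((?O - X) \<inter> ?Z) + emeasure (P \<mu>) (X \<inter> ?Z) =
         (\<integral>\<^sup>+\<omega>. indicator (?O - X) \<omega> * ?f \<omega> \<partial>P \<mu>) + emeasure (P \<mu>) (X \<inter> ?Z)"
      using e1 e2 compl.IH by simp
    then show ?case using fin ennreal_add_left_cancel[of "emeasure (P \<mu>) (X \<inter> ?Z)"] by (simp add: add.commute)
  next
    case (union F)
    have Xm: "\<And>i. F i \<in> sets (stream_space M)" using Fm union by auto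
    have "emeasure (P \<mu>) ((\<Union>i. F i) \<inter> ?Z) = emeasure (P \<mu>) (\<Union>i. F i \<inter> ?Z)" by simp
    also have "\<dots> = (\<Sum>i. emeasure (P \<mu>) (F i \<inter> ?Z))"
      using union Xm by (intro suminf_emeasure[symmetric]) (auto simp: PM disjoint_family_on_def)
    also have "\<dots> = (\<Sum>i. \<integral>\<^sup>+\<omega>. indicator (F i) \<omega> * ?f \<omega> \<partial>P \<mu>)" using union.IH by simp
    also have "\<dots> = (\<integral>\<^sup>+\<omega>. (\<Sum>i. indicator (F i) \<omega> * ?f \<omega>) \<partial>P \<mu>)"
    proof -
      have "(\<lambda>\<omega>. indicator (F i) \<omega> * ?f \<omega>) \<in> borel_measurable (stream_space M)" for i
        by (intro borel_measurable_times_ennreal borel_measurable_indicator fm Xm)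
      then show ?thesis by (intro nn_integral_suminf[symmetric]) (auto simp: measurable_cong_sets[OF PM(2) refl])
    qed
    also have "\<dots> = (\<integral>\<^sup>+\<omega>. indicator (\<Union>i. F i) \<omega> * ?f \<omega> \<partial>P \<mu>)"
      using suminf_indicator[OF union(1)] by (simp add: ennreal_suminf_multc)
    finally show ?case .
  }
qed

end


definition condm :: "'b measure \<Rightarrow> 'b set \<Rightarrow> 'b measure" where
  "condm Q G = density Q (\<lambda>\<omega>. indicator G \<omega> / emeasure Q G)"

lemma condm:
  assumes Q: "prob_space Q" and G: "G \<in> sets Q" and pos: "emeasure Q G \<noteq> 0"
  shows "sets (condm Q G) = sets Q" "space (condm Q G) = space Q"
    "\<And>X. X \<in> sets Q \<Longrightarrow> emeasure (condm Q G) X = emeasure Q (G \<inter> X) / emeasure Q G"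
    "\<And>f. f \<in> borel_measurable Q \<Longrightarrow> nn_integral (condm Q G) f = (\<integral>\<^sup>+\<omega>. f \<omega> * indicator G \<omega> \<partial>Q) / emeasure Q G"
    "prob_space (condm Q G)"
proof -
  interpret prob_space Q by fact
  have fin: "emeasure Q G < top" by (simp add: emeasure_eq_measure)
  have dm[measurable]: "(\<lambda>\<omega>. indicator G \<omega> / emeasure Q G) \<in> borel_measurable Q" using G by measurable
  show s: "sets (condm Q G) = sets Q" "space (condm Q G) = space Q" by (auto simp: condm_def)
  show e: "emeasure (condm Q G) X = emeasure Q (G \<inter> X) / emeasure Q G" if X: "X \<in> sets Q" for X
  proof -
    have "emeasure (condm Q G) X = (\<integral>\<^sup>+\<omega>. indicator (G \<inter> X) \<omega> / emeasure Q G \<partial>Q)"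
      unfolding condm_def using X by (subst emeasure_density[OF dm X]) (auto intro!: nn_integral_cong simp: indicator_def)
    also have "\<dots> = emeasure Q (G \<inter> X) / emeasure Q G"
      using G X by (subst nn_integral_divide) auto
    finally show ?thesis .
  qed
  show "nn_integral (condm Q G) f = (\<integral>\<^sup>+\<omega>. f \<omega> * indicator G \<omega> \<partial>Q) / emeasure Q G"
    if f: "f \<in> borel_measurable Q" for f
  proof -
    have "nn_integral (condm Q G) f = (\<integral>\<^sup>+\<omega>. (f \<omega> * indicator G \<omega>) / emeasure Q G \<partial>Q)"
      unfolding condm_def using f by (subst nn_integral_density[OF dm f]) (auto intro!: nn_integral_cong simp: ennreal_times_divide mult.commute)
    also have "\<dots> = (\<integral>\<^sup>+\<omega>. f \<omega> * indicator G \<omega> \<partial>Q) / emeasure Q G"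
      using G f by (subst nn_integral_divide) auto
    finally show ?thesis .
  qed
  show "prob_space (condm Q G)"
  proof
    have "emeasure (condm Q G) (space (condm Q G)) = emeasure Q (G \<inter> space Q) / emeasure Q G"
      using e[of "space Q"] s by simp
    also have "\<dots> = 1" using G sets.sets_into_space[OF G] pos fin by (simp add: Int_absorb2)
    finally show "emeasure (condm Q G) (space (condm Q G)) = 1" .
  qed
qed

context pathsys
begin

lemma MP:
  assumes mu: "\<mu> \<in> Dist M" and G: "G \<in> Fk M k" and pos: "emeasure (P \<mu>) G \<noteq> 0"
  defines "\<nu> \<equiv> distr (condm (P \<mu>) G) M (\<lambda>\<omega>. \<omega> !! k)"
  shows "\<nu> \<in> Dist M" "P \<nu> = distr (condm (P \<mu>) G) (stream_space M) (sdrop k)"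
    "\<And>C. C \<in> sets M \<Longrightarrow> emeasure \<nu> C = emeasure (P \<mu>) (G \<inter> {\<omega> \<in> streams (space M). \<omega> !! k \<in> C}) / emeasure (P \<mu>) G"
proof -
  note PM = Pmu[OF mu] and DM = Dist_D[OF mu]
  let ?Q = "condm (P \<mu>) G"
  have Gs: "G \<in> sets (P \<mu>)" using G Fk_sets PM by auto
  note Q = condm[OF PM(1) Gs pos]
  have snthm: "(\<lambda>\<omega>. \<omega> !! k) \<in> ?Q \<rightarrow>\<^sub>M M" using Q PM by (simp add: measurable_cong_sets[OF Q(1) refl])
  have sdm: "sdrop k \<in> ?Q \<rightarrow>\<^sub>M stream_space M" using Q PM by (simp add: measurable_cong_sets[OF Q(1) refl])
  show nuD: "\<nu> \<in> Dist M" unfolding \<nu>_def Dist_def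
    using prob_space.prob_space_distr[OF Q(5) snthm] by simp
  show "emeasure \<nu> C = emeasure (P \<mu>) (G \<inter> {\<omega> \<in> streams (space M). \<omega> !! k \<in> C}) / emeasure (P \<mu>) G"
    if C: "C \<in> sets M" for C
  proof -
    have "emeasure \<nu> C = emeasure ?Q ((\<lambda>\<omega>. \<omega> !! k) -` C \<inter> space ?Q)"
      unfolding \<nu>_def using C snthm by (rule emeasure_distr[rotated])
    also have "(\<lambda>\<omega>. \<omega> !! k) -` C \<inter> space ?Q = {\<omega> \<in> streams (space M). \<omega> !! k \<in> C}"
      using Q PM by auto
    also have "emeasure ?Q {\<omega> \<in> streams (space M). \<omega> !! k \<in> C} =
       emeasure (P \<mu>) (G \<inter> {\<omega> \<in> streams (space M). \<omega> !! k \<in> C}) / emeasure (P \<mu>) G"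
    proof (rule Q(3))
      have "{\<omega> \<in> space (stream_space M). \<omega> !! k \<in> C} \<in> sets (stream_space M)" using C by measurable
      then show "{\<omega> \<in> streams (space M). \<omega> !! k \<in> C} \<in> sets (P \<mu>)" using PM by (simp add: space_stream_space)
    qed
    finally show ?thesis .
  qed
  let ?R = "distr ?Q (stream_space M) (sdrop k)"
  have "is_path_measure M \<kappa> \<nu> ?R"
    unfolding is_path_measure_def
  proof (intro conjI allI impI)
    show "prob_space ?R" using prob_space.prob_space_distr[OF Q(5) sdm] .
    show "sets ?R = sets (stream_space M)" by simp
    fix As :: "'a set list" assume ne: "As \<noteq> []" and As: "set As \<subseteq> sets M"
    obtain A0 As' where e: "As = A0 # As'" using ne by (cases As) auto
    have A0: "A0 \<in> sets M" "set As' \<subseteq> sets M" using As e by auto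
    have "emeasure ?R (cyl M As) = emeasure ?Q (sdrop k -` cyl M As \<inter> space ?Q)"
      using sdm cyl_sets[OF As] by (rule emeasure_distr)
    also have "sdrop k -` cyl M As \<inter> space ?Q = scyl M k As" using Q PM scyl_sdrop by simp
    also have "emeasure ?Q (scyl M k As) = emeasure (P \<mu>) (G \<inter> scyl M k As) / emeasure (P \<mu>) G"
      using Q(3) scyl_sets[OF As] PM by simp
    also have "emeasure (P \<mu>) (G \<inter> scyl M k As) =
       (\<integral>\<^sup>+\<omega>. indicator G \<omega> * (indicator A0 (\<omega> !! k) * kint \<kappa> As' (\<omega> !! k)) \<partial>P \<mu>)"
      unfolding e by (rule MPcyl[OF mu G A0])
    also have "(\<integral>\<^sup>+\<omega>. indicator G \<omega> * (indicator A0 (\<omega> !! k) * kint \<kappa> As' (\<omega> !! k)) \<partial>P \<mu>) / emeasure (P \<mu>) G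
       = nn_integral ?Q (\<lambda>\<omega>. indicator A0 (\<omega> !! k) * kint \<kappa> As' (\<omega> !! k))"
    proof -
      have hm[measurable]: "(\<lambda>x. indicator A0 x * kint \<kappa> As' x) \<in> borel_measurable M"
        using NG_meas[OF A0(2), of "\<lambda>_. 1"] A0(1) by (simp add: kint_NG)
      have "(\<lambda>\<omega>. indicator A0 (\<omega> !! k) * kint \<kappa> As' (\<omega> !! k)) \<in> borel_measurable (P \<mu>)"
        using measurable_compose[OF measurable_snth hm] PM by (simp add: measurable_cong_sets[OF PM(2) refl])
      then show ?thesis using Q(4) by (simp add: mult.commute)
    qed
    also have "\<dots> = (\<integral>\<^sup>+x. indicator A0 x * kint \<kappa> As' x \<partial>\<nu>)"
    proof -
      have hm[measurable]: "(\<lambda>x. indicator A0 x * kint \<kappa> As' x) \<in> borel_measurable M"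
        using NG_meas[OF A0(2), of "\<lambda>_. 1"] A0(1) by (simp add: kint_NG)
      show ?thesis unfolding \<nu>_def using snthm by (subst nn_integral_distr) auto
    qed
    also have "\<dots> = cyl_prob \<kappa> \<nu> As" using e by simp
    finally show "emeasure ?R (cyl M As) = cyl_prob \<kappa> \<nu> As" .
  qed
  then show "P \<nu> = ?R" using path nuD by (auto intro: path_unique)
qed

end


lemma Fk_sigma: "sigma_algebra (streams (space M)) (Fk M k)"
  unfolding Fk_def by (rule sigma_algebra_sigma_sets[OF Gen_Pow])

lemma Gen_Fk: "X \<in> Gen M k \<Longrightarrow> X \<in> Fk M k"
  unfolding Fk_def by (rule sigma_sets.Basic)

lemma cyl_pad: "cyl M (L @ replicate r (space M)) = cyl M L"
  by (auto simp: cyl_def nth_append snth_in)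

lemma Gen_mono: "k \<le> k' \<Longrightarrow> Gen M k \<subseteq> Gen M k'"
proof
  fix X assume k: "k \<le> k'" and "X \<in> Gen M k"
  then obtain L where L: "X = cyl M L" "length L = Suc k" "set L \<subseteq> sets M" unfolding Gen_def by blast
  have "X = cyl M (L @ replicate (k' - k) (space M))" using L by (simp add: cyl_pad)
  moreover have "length (L @ replicate (k' - k) (space M)) = Suc k'" using L k by simp
  moreover have "set (L @ replicate (k' - k) (space M)) \<subseteq> sets M" using L by auto
  ultimately show "X \<in> Gen M k'" unfolding Gen_def by blast
qed

lemma Fk_mono: "k \<le> k' \<Longrightarrow> X \<in> Fk M k \<Longrightarrow> X \<in> Fk M k'"
  unfolding Fk_def using sigma_sets_mono'[OF Gen_mono] by blast

lemma scyl_Gen: "L \<noteq> [] \<Longrightarrow> set L \<subseteq> sets M \<Longrightarrow> scyl M k L \<in> Gen M (k + length L - 1)"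
proof -
  assume L: "L \<noteq> []" "set L \<subseteq> sets M"
  have "scyl M k L = cyl M (replicate k (space M) @ L)"
  proof -
    have "(\<forall>j<k + length L. \<omega> !! j \<in> (replicate k (space M) @ L) ! j) \<longleftrightarrow> (\<forall>l<length L. \<omega> !! (k + l) \<in> L ! l)"
      if "\<omega> \<in> streams (space M)" for \<omega>
    proof safe
      fix l assume "\<forall>j<k + length L. \<omega> !! j \<in> (replicate k (space M) @ L) ! j" "l < length L"
      then show "\<omega> !! (k + l) \<in> L ! l" by (auto dest!: spec[of _ "k + l"] simp: nth_append)
    next
      fix j assume a: "\<forall>l<length L. \<omega> !! (k + l) \<in> L ! l" "j < k + length L"
      show "\<omega> !! j \<in> (replicate k (space M) @ L) ! j"
      proof (cases "j < k")
        case True then show ?thesis using that by (simp add: nth_append snth_in)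
      next
        case False then show ?thesis using a(1)[rule_format, of "j - k"] a(2) by (simp add: nth_append)
      qed
    qed
    then show ?thesis by (auto simp: scyl_def cyl_def)
  qed
  moreover have "length (replicate k (space M) @ L) = Suc (k + length L - 1)" using L by (cases L) auto
  moreover have "set (replicate k (space M) @ L) \<subseteq> sets M" using L by auto
  ultimately show ?thesis unfolding Gen_def by blast
qed

lemma coord_Fk: "s \<le> k \<Longrightarrow> C \<in> sets M \<Longrightarrow> {\<omega> \<in> streams (space M). \<omega> !! s \<in> C} \<in> Fk M k"
proof -
  assume "s \<le> k" "C \<in> sets M"
  then have "scyl M s [C] \<in> Fk M k" using scyl_Gen[of "[C]" M s] Gen_Fk Fk_mono by fastforce
  moreover have "scyl M s [C] = {\<omega> \<in> streams (space M). \<omega> !! s \<in> C}" by (auto simp: scyl_def)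
  ultimately show ?thesis by simp
qed

lemma Ev_sets: "B \<in> sets M \<Longrightarrow> Ev M B \<in> sets (stream_space M)"
proof -
  assume [measurable]: "B \<in> sets M"
  have "{\<omega> \<in> space (stream_space M). \<exists>k. \<omega> !! k \<in> B} \<in> sets (stream_space M)" by measurable
  then show ?thesis by (simp add: Ev_def space_stream_space)
qed

context pathsys
begin

lemma MPr:
  assumes mu: "\<mu> \<in> Dist M" and G: "G \<in> Fk M k" and pos: "measure (P \<mu>) G > 0"
  defines "\<nu> \<equiv> distr (condm (P \<mu>) G) M (\<lambda>\<omega>. \<omega> !! k)"
  shows "\<nu> \<in> Dist M"
    "\<And>C. C \<in> sets M \<Longrightarrow> measure \<nu> C = measure (P \<mu>) (G \<inter> {\<omega> \<in> streams (space M). \<omega> !! k \<in> C}) / measure (P \<mu>) G"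
    "\<And>Z. Z \<in> sets (stream_space M) \<Longrightarrow> measure (P \<nu>) Z = measure (P \<mu>) (G \<inter> (sdrop k -` Z \<inter> streams (space M))) / measure (P \<mu>) G"
proof -
  note PM = Pmu[OF mu]
  interpret PP: prob_space "P \<mu>" by (rule PM(1))
  have pos': "emeasure (P \<mu>) G \<noteq> 0" using pos by (simp add: PP.emeasure_eq_measure)
  note M = MP[OF mu G pos', folded \<nu>_def]
  show "\<nu> \<in> Dist M" by (rule M(1))
  have Gs: "G \<in> sets (P \<mu>)" using G Fk_sets PM by auto
  note Q = condm[OF PM(1) Gs pos']
  show "measure \<nu> C = measure (P \<mu>) (G \<inter> {\<omega> \<in> streams (space M). \<omega> !! k \<in> C}) / measure (P \<mu>) G"
    if C: "C \<in> sets M" for C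
  proof -
    have "emeasure \<nu> C = ennreal (measure (P \<mu>) (G \<inter> {\<omega> \<in> streams (space M). \<omega> !! k \<in> C}) / measure (P \<mu>) G)"
      using M(3)[OF C] pos by (simp add: PP.emeasure_eq_measure divide_ennreal)
    then show ?thesis unfolding measure_def by simp
  qed
  show "measure (P \<nu>) Z = measure (P \<mu>) (G \<inter> (sdrop k -` Z \<inter> streams (space M))) / measure (P \<mu>) G"
    if Z: "Z \<in> sets (stream_space M)" for Z
  proof -
    have sdm: "sdrop k \<in> condm (P \<mu>) G \<rightarrow>\<^sub>M stream_space M" using Q PM by (simp add: measurable_cong_sets[OF Q(1) refl])
    have "emeasure (P \<nu>) Z = emeasure (condm (P \<mu>) G) (sdrop k -` Z \<inter> streams (space M))"
      using emeasure_distr[OF sdm Z] M(2) Q PM by simp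
    also have "\<dots> = emeasure (P \<mu>) (G \<inter> (sdrop k -` Z \<inter> streams (space M))) / emeasure (P \<mu>) G"
    proof (rule Q(3))
      have "sdrop k -` Z \<inter> space (stream_space M) \<in> sets (stream_space M)"
        using measurable_sdrop Z by (rule measurable_sets)
      then show "sdrop k -` Z \<inter> streams (space M) \<in> sets (P \<mu>)" using PM by (simp add: space_stream_space)
    qed
    also have "\<dots> = ennreal (measure (P \<mu>) (G \<inter> (sdrop k -` Z \<inter> streams (space M))) / measure (P \<mu>) G)"
      using pos by (simp add: PP.emeasure_eq_measure divide_ennreal)
    finally show ?thesis unfolding measure_def by simp
  qed
qed

end


lemma capl_butlast: "L \<noteq> [] \<Longrightarrow> capl L a = butlast L @ [last L \<inter> a]"
  by (induction L a rule: capl.induct) auto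

lemma scyl_capl: "L \<noteq> [] \<Longrightarrow> scyl M k (capl L a) = scyl M k L \<inter> {\<omega> \<in> streams (space M). \<omega> !! (k + (length L - 1)) \<in> a}"
  by (auto simp: scyl_def nth_capl split: if_splits)

lemma measure_of_eqI:
  assumes "sets N = sets M" "space N = space M" "\<And>a. a \<in> sets M \<Longrightarrow> f a = emeasure N a"
  shows "measure_of (space M) (sets M) f = N"
proof -
  have "measure_of (space M) (sets M) f = measure_of (space M) (sets M) (emeasure N)"
    using assms(3) by (intro measure_of_eq[OF sets.space_closed]) (simp add: sets.sigma_sets_eq)
  also have "\<dots> = measure_of (space N) (sets N) (emeasure N)" using assms by simp
  also have "\<dots> = N" by (rule measure_of_of_measure)
  finally show ?thesis .
qed

locale sts = pathsys +
  fixes B :: "'a set" and m :: nat and A :: "nat \<Rightarrow> 'a set list" and p :: real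
  assumes B: "B \<in> sets M"
    and Bt_meas: "Btilde M P B \<in> sets M"
    and m: "m \<ge> 1"
    and A: "\<forall>j < m. A j \<noteq> [] \<and> set (A j) \<subseteq> sets M"
    and p: "p > 0"
    and cond1: "\<forall>\<mu> \<in> Dist M. measure (P \<mu>) (\<Union>j<m. GF M (A j)) = 1"
    and cond2: "\<forall>j < m. \<forall>\<nu> \<in> Dist M.
        measure (P \<nu>) (cyl M (A j)) > 0 \<longrightarrow>
        measure (cond_seq M P \<nu> (A j)) (Btilde M P B) < 1 \<longrightarrow>
        measure (P (cond_set M (cond_seq M P \<nu> (A j)) (space M - Btilde M P B))) (Ev M B) \<ge> p"
begin

definition "E = streams (space M) - (Ev M B \<union> Ev M (Btilde M P B))"

lemma E_sets: "E \<in> sets (stream_space M)"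
  unfolding E_def using Ev_sets[OF B] Ev_sets[OF Bt_meas] by (auto intro!: sets.Diff sets.Un)

lemma E_D: "\<omega> \<in> E \<Longrightarrow> \<omega> \<in> streams (space M) \<and> \<omega> !! t \<notin> B \<and> \<omega> !! t \<notin> Btilde M P B"
  unfolding E_def Ev_def by auto

lemma key:
  assumes mu: "\<mu> \<in> Dist M" and G: "G \<in> Fk M k" and j: "j < m"
  shows "measure (P \<mu>) (E \<inter> (G \<inter> scyl M k (A j))) \<le> (1 - min p 1) * measure (P \<mu>) (G \<inter> scyl M k (A j))"
proof -
  note PM = Pmu[OF mu]
  interpret PP: prob_space "P \<mu>" by (rule PM(1))
  define L where "L = A j"
  have L: "L \<noteq> []" "set L \<subseteq> sets M" using A j by (auto simp: L_def)
  define n where "n = length L - 1"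
  define K where "K = k + n"
  define Bt where "Bt = Btilde M P B"
  define Om where "Om = streams (space M)"
  define X where "X C = {\<omega> \<in> Om. \<omega> !! K \<in> C}" for C
  define D where "D = G \<inter> scyl M k L"
  define D' where "D' = D \<inter> X (space M - Bt)"
  have FK: "sigma_algebra Om (Fk M K)" unfolding Om_def by (rule Fk_sigma)
  interpret FF: sigma_algebra Om "Fk M K" by (rule FK)
  have DF: "D \<in> Fk M K"
  proof -
    have "G \<in> Fk M K" using Fk_mono[OF _ G] by (simp add: K_def)
    moreover have "k + length L - 1 = K" using L by (cases L) (auto simp: K_def n_def)
    then have "scyl M k L \<in> Fk M K" using Gen_Fk[OF scyl_Gen[OF L]] by metis
    ultimately show ?thesis unfolding D_def using FF.Int by blast
  qed
  have XF: "X C \<in> Fk M K" if "C \<in> sets M" for C unfolding X_def Om_def using coord_Fk[OF _ that] by simp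
  have Btm: "Bt \<in> sets M" using Bt_meas by (simp add: Bt_def)
  have D'F: "D' \<in> Fk M K" unfolding D'_def using DF XF[of "space M - Bt"] Btm FF.Int by blast
  have Fs: "Y \<in> sets (P \<mu>)" if "Y \<in> Fk M K" for Y using that Fk_sets PM by auto
  have Dsub: "D \<subseteq> Om" by (auto simp: D_def scyl_def Om_def)
  have Es: "E \<in> sets (P \<mu>)" using E_sets PM by auto
  have ED: "E \<inter> D \<subseteq> D'"
    using E_D unfolding D'_def X_def Om_def Bt_def by (auto simp: snth_in)
  have mD'D: "measure (P \<mu>) D' \<le> measure (P \<mu>) D"
    using Fs[OF DF] by (intro PP.finite_measure_mono) (auto simp: D'_def)
  have star: "measure (P \<mu>) (E \<inter> D) \<le> (1 - p) * measure (P \<mu>) D'"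
  proof (cases "measure (P \<mu>) D' = 0")
    case True
    then have "measure (P \<mu>) (E \<inter> D) \<le> 0"
      using PP.finite_measure_mono[OF ED Fs[OF D'F]] by simp
    then show ?thesis using True by simp
  next
    case False
    then have D'pos: "measure (P \<mu>) D' > 0" using measure_nonneg[of "P \<mu>" D'] by linarith
    then have Dpos: "measure (P \<mu>) D > 0" using mD'D by linarith
    have Gpos: "measure (P \<mu>) G > 0"
    proof -
      have "measure (P \<mu>) D \<le> measure (P \<mu>) G"
        using G Fk_sets PM by (intro PP.finite_measure_mono) (auto simp: D_def)
      then show ?thesis using Dpos by linarith
    qed
    define \<nu> where "\<nu> = distr (condm (P \<mu>) G) M (\<lambda>\<omega>. \<omega> !! k)"
    note N = MPr[OF mu G Gpos, folded \<nu>_def]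
    define lam where "lam = distr (condm (P \<mu>) D) M (\<lambda>\<omega>. \<omega> !! K)"
    note La = MPr[OF mu DF Dpos, folded lam_def]
    define lam' where "lam' = distr (condm (P \<mu>) D') M (\<lambda>\<omega>. \<omega> !! K)"
    note La' = MPr[OF mu D'F D'pos, folded lam'_def]
    interpret PN: prob_space "P \<nu>" using Pmu(1)[OF N(1)] .
    interpret LL: prob_space lam using Dist_D(1)[OF La(1)] .
    have sl: "sets lam = sets M" "space lam = space M" using Dist_D[OF La(1)] by auto
    have sl': "sets lam' = sets M" "space lam' = space M" using Dist_D[OF La'(1)] by auto
    have Pnu: "measure (P \<nu>) (cyl M L') = measure (P \<mu>) (G \<inter> scyl M k L') / measure (P \<mu>) G"
      if "set L' \<subseteq> sets M" for L'
      using N(3)[OF cyl_sets[OF that]] by (simp add: scyl_sdrop)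
    have cylpos: "measure (P \<nu>) (cyl M L) > 0"
      using Pnu[OF L(2)] Dpos Gpos by (simp add: D_def)
    have cs: "cond_seq M P \<nu> L = lam"
      unfolding cond_seq_def
    proof (rule measure_of_eqI[OF sl])
      fix a assume a: "a \<in> sets M"
      have e1: "butlast L @ [last L \<inter> a] = capl L a" using capl_butlast[OF L(1)] by simp
      have sa: "set (capl L a) \<subseteq> sets M" using set_capl[OF L(2) a] .
      have seteq: "G \<inter> scyl M k (capl L a) = D \<inter> X a"
        using scyl_capl[OF L(1), of M k a] by (auto simp: D_def X_def Om_def K_def n_def)
      have "emeasure (P \<nu>) (cyl M (capl L a)) / emeasure (P \<nu>) (cyl M L) =
         ennreal (measure (P \<nu>) (cyl M (capl L a)) / measure (P \<nu>) (cyl M L))"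
        using cylpos by (simp add: PN.emeasure_eq_measure divide_ennreal)
      also have "measure (P \<nu>) (cyl M (capl L a)) / measure (P \<nu>) (cyl M L) =
          measure (P \<mu>) (D \<inter> X a) / measure (P \<mu>) D"
        using Pnu[OF sa] Pnu[OF L(2)] Gpos seteq by (simp add: D_def)
      also have "\<dots> = measure lam a" using La(2)[OF a] by (simp add: X_def Om_def)
      finally show "emeasure (P \<nu>) (cyl M (butlast L @ [last L \<inter> a])) / emeasure (P \<nu>) (cyl M L) = emeasure lam a"
        using e1 by (simp add: LL.emeasure_eq_measure)
    qed
    have XBt: "D \<inter> X Bt \<union> D' = D" "D \<inter> X Bt \<inter> D' = {}"
      using Btm sets.sets_into_space[OF Btm] Dsub by (auto simp: D'_def X_def Om_def snth_in)
    have mBt: "measure lam Bt < 1"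
    proof -
      have "measure (P \<mu>) (D \<inter> X Bt) + measure (P \<mu>) D' = measure (P \<mu>) D"
        using PP.finite_measure_Union[of "D \<inter> X Bt" D'] XBt Fs[OF DF] Fs[OF XF[OF Btm]] Fs[OF D'F]
        by (auto intro!: sets.Int)
      then have "measure (P \<mu>) (D \<inter> X Bt) / measure (P \<mu>) D < 1"
        using D'pos Dpos by (simp add: divide_less_eq)
      then show ?thesis using La(2)[OF Btm] by (simp add: X_def Om_def)
    qed
    have c2: "measure (P (cond_set M lam (space M - Bt))) (Ev M B) \<ge> p"
      using cond2[rule_format, OF j N(1)] cylpos mBt cs by (simp add: L_def Bt_def)
    have cs2: "cond_set M lam (space M - Bt) = lam'"
      unfolding cond_set_def
    proof (rule measure_of_eqI[OF sl'])
      fix a assume a: "a \<in> sets M"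
      have Sm: "space M - Bt \<in> sets M" using Btm by auto
      have am: "a \<inter> (space M - Bt) \<in> sets M" using a Sm by auto
      have mS: "measure lam (space M - Bt) = measure (P \<mu>) D' / measure (P \<mu>) D"
        using La(2)[OF Sm] by (simp add: D'_def X_def Om_def)
      have mS': "measure lam (a \<inter> (space M - Bt)) = measure (P \<mu>) (D' \<inter> X a) / measure (P \<mu>) D"
      proof -
        have "D \<inter> {\<omega> \<in> streams (space M). \<omega> !! K \<in> a \<inter> (space M - Bt)} = D' \<inter> X a"
          by (auto simp: D'_def X_def Om_def)
        then show ?thesis using La(2)[OF am] by simp
      qed
      have "emeasure lam (a \<inter> (space M - Bt)) / emeasure lam (space M - Bt) =
        ennreal (measure lam (a \<inter> (space M - Bt)) / measure lam (space M - Bt))"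
        using mS D'pos Dpos by (simp add: LL.emeasure_eq_measure divide_ennreal)
      also have "measure lam (a \<inter> (space M - Bt)) / measure lam (space M - Bt) =
          (measure (P \<mu>) (D' \<inter> X a) / measure (P \<mu>) D) / (measure (P \<mu>) D' / measure (P \<mu>) D)"
        unfolding mS mS' ..
      also have "\<dots> = measure (P \<mu>) (D' \<inter> X a) / measure (P \<mu>) D'"
        using Dpos D'pos by (simp add: field_simps)
      also have "\<dots> = measure lam' a" using La'(2)[OF a] by (simp add: X_def Om_def)
      finally show "emeasure lam (a \<inter> (space M - Bt)) / emeasure lam (space M - Bt) = emeasure lam' a"
        using finite_measure.emeasure_eq_measure[OF prob_space.axioms(1)[OF Dist_D(1)[OF La'(1)]]] by simp
    qed
    define T where "T = sdrop K -` Ev M B \<inter> Om"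
    have "measure (P lam') (Ev M B) = measure (P \<mu>) (D' \<inter> T) / measure (P \<mu>) D'"
      using La'(3)[OF Ev_sets[OF B]] by (simp add: T_def Om_def)
    then have pT: "p * measure (P \<mu>) D' \<le> measure (P \<mu>) (D' \<inter> T)"
      using c2 cs2 D'pos by (simp add: le_divide_eq)
    have Tm: "T \<in> sets (P \<mu>)"
    proof -
      have "sdrop K -` Ev M B \<inter> space (stream_space M) \<in> sets (stream_space M)"
        using measurable_sdrop Ev_sets[OF B] by (rule measurable_sets)
      then show ?thesis using PM by (simp add: T_def Om_def space_stream_space)
    qed
    have ET: "E \<inter> D \<subseteq> D' - (D' \<inter> T)"
    proof
      fix \<omega> assume w: "\<omega> \<in> E \<inter> D"
      then have "\<omega> \<in> D'" using ED by auto
      moreover have "\<omega> \<notin> T"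
        using E_D[of \<omega>] w by (auto simp: T_def Ev_def sdrop_snth)
      ultimately show "\<omega> \<in> D' - (D' \<inter> T)" by auto
    qed
    have "measure (P \<mu>) (E \<inter> D) \<le> measure (P \<mu>) (D' - (D' \<inter> T))"
      using ET Fs[OF D'F] Tm by (intro PP.finite_measure_mono) auto
    also have "\<dots> = measure (P \<mu>) D' - measure (P \<mu>) (D' \<inter> T)"
      using Fs[OF D'F] Tm by (intro PP.finite_measure_Diff) auto
    finally show ?thesis using pT by (simp add: algebra_simps)
  qed
  have "measure (P \<mu>) (E \<inter> D) \<le> (1 - min p 1) * measure (P \<mu>) D"
  proof (cases "p \<le> 1")
    case True
    then have "(1 - p) * measure (P \<mu>) D' \<le> (1 - p) * measure (P \<mu>) D" using mD'D by (intro mult_left_mono) auto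
    then show ?thesis using star True by simp
  next
    case False
    then have "(1 - p) * measure (P \<mu>) D' \<le> 0" by (intro mult_nonpos_nonneg) auto
    then show ?thesis using star False by simp
  qed
  then show ?thesis by (simp add: D_def L_def)
qed

end


lemma Fk_top: "streams (space M) \<in> Fk M k"
  using Gen_Fk[OF Omega_Gen] .

lemma Fk_compl: "Y \<in> Fk M k \<Longrightarrow> streams (space M) - Y \<in> Fk M k"
  unfolding Fk_def by (rule sigma_sets.Compl)

lemma Fk_Int: "Y \<in> Fk M k \<Longrightarrow> Z \<in> Fk M k \<Longrightarrow> Y \<inter> Z \<in> Fk M k"
proof -
  interpret FF: sigma_algebra "streams (space M)" "Fk M k" by (rule Fk_sigma)
  show "Y \<in> Fk M k \<Longrightarrow> Z \<in> Fk M k \<Longrightarrow> Y \<inter> Z \<in> Fk M k" by (rule FF.Int)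
qed

lemma Fk_sub: "Y \<in> Fk M k \<Longrightarrow> Y \<subseteq> streams (space M)"
  unfolding Fk_def using sigma_sets_into_sp[OF Gen_Pow] by blast

lemma Fk_all:
  assumes "finite I" "\<And>x. x \<in> I \<Longrightarrow> Y x \<in> Fk M k"
  shows "{\<omega> \<in> streams (space M). \<forall>x\<in>I. \<omega> \<in> Y x} \<in> Fk M k"
  using assms
proof (induction I rule: finite_induct)
  case empty then show ?case using Fk_top by simp
next
  case (insert a I)
  have eq: "{\<omega> \<in> streams (space M). \<forall>x\<in>insert a I. \<omega> \<in> Y x} = Y a \<inter> {\<omega> \<in> streams (space M). \<forall>x\<in>I. \<omega> \<in> Y x}"
    using Fk_sub[OF insert.prems[of a]] by auto
  have 1: "Y a \<in> Fk M k" using insert.prems by simp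
  have 2: "{\<omega> \<in> streams (space M). \<forall>x\<in>I. \<omega> \<in> Y x} \<in> Fk M k" using insert.IH insert.prems by simp
  show ?case unfolding eq using Fk_Int[OF 1 2] .
qed

lemma pigeon:
  fixes Q :: "nat \<Rightarrow> bool"
  assumes Lnn: "Lnn > 0" and inf: "\<forall>N. \<exists>k\<ge>N. Q k"
  shows "\<exists>r<Lnn. \<forall>N. \<exists>i\<ge>N. Q (r + i * Lnn)"
proof (rule ccontr)
  assume "\<not> ?thesis"
  then have "\<forall>r<Lnn. \<exists>N. \<forall>i\<ge>N. \<not> Q (r + i * Lnn)" by auto
  then obtain f where f: "\<And>r i. r < Lnn \<Longrightarrow> i \<ge> f r \<Longrightarrow> \<not> Q (r + i * Lnn)" by metis
  define N0 where "N0 = (\<Sum>r<Lnn. f r)"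
  obtain k where k: "k \<ge> N0 * Lnn" "Q k" using inf by blast
  define r where "r = k mod Lnn"
  define i where "i = k div Lnn"
  have r: "r < Lnn" using Lnn by (simp add: r_def)
  have "N0 \<le> i" using k(1) Lnn unfolding i_def by (metis div_le_mono div_mult_self_is_m)
  moreover have "f r \<le> N0" unfolding N0_def using r by (intro member_le_sum) auto
  ultimately have "\<not> Q (r + i * Lnn)" using f r by auto
  moreover have "r + i * Lnn = k" by (simp add: r_def i_def)
  ultimately show False using k by simp
qed

context sts
begin

definition "Ir j r = {\<omega> \<in> streams (space M). \<forall>N. \<exists>i\<ge>N. \<omega> \<in> scyl M (r + i * length (A j)) (A j)}"

lemma Ir_null:
  assumes mu: "\<mu> \<in> Dist M" and j: "j < m"
  shows "measure (P \<mu>) (E \<inter> Ir j r) = 0"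
proof -
  note PM = Pmu[OF mu]
  interpret PP: prob_space "P \<mu>" by (rule PM(1))
  define L where "L = A j"
  have L: "L \<noteq> []" "set L \<subseteq> sets M" using A j by (auto simp: L_def)
  define Lnn where "Lnn = length L"
  have Lnn: "Lnn \<ge> 1" using L by (cases L) (auto simp: Lnn_def)
  define q where "q = min p 1"
  have q: "0 < q" "q \<le> 1" using p by (auto simp: q_def)
  define t where "t i = r + i * Lnn" for i
  define Om where "Om = streams (space M)"
  define Mt where "Mt i = scyl M (t i) L" for i
  define BB where "BB = B \<union> Btilde M P B"
  have BBm: "BB \<in> sets M" using B Bt_meas by (auto simp: BB_def)
  define Gi where "Gi N i = {\<omega> \<in> Om. (\<forall>s<t i. \<omega> !! s \<notin> BB) \<and> (\<forall>i'\<in>{N..<i}. \<omega> \<notin> Mt i')}" for N i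
  define D where "D N i = Gi N i \<inter> Mt i" for N i
  define H where "H N = (\<Union>k. D N (N + k))" for N
  have tmono: "i' < i \<Longrightarrow> t i' + Lnn - 1 \<le> t i" for i i'
  proof -
    assume "i' < i"
    then have "Suc i' * Lnn \<le> i * Lnn" by (intro mult_right_mono) auto
    then show ?thesis using Lnn by (simp add: t_def)
  qed
  have Mt_F: "Mt i' \<in> Fk M (t i)" if "i' < i" for i i'
  proof -
    have "Mt i' \<in> Fk M (t i' + length L - 1)" unfolding Mt_def using Gen_Fk[OF scyl_Gen[OF L]] .
    then show ?thesis using Fk_mono[OF tmono[OF that]] by (simp add: Lnn_def)
  qed
  have G_F: "Gi N i \<in> Fk M (t i)" for N i
  proof -
    have a: "{\<omega> \<in> Om. \<forall>s\<in>{..<t i}. \<omega> \<in> Om - {\<omega> \<in> Om. \<omega> !! s \<in> BB}} \<in> Fk M (t i)"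
      unfolding Om_def by (intro Fk_all Fk_compl coord_Fk BBm) auto
    have b: "{\<omega> \<in> Om. \<forall>i'\<in>{N..<i}. \<omega> \<in> Om - Mt i'} \<in> Fk M (t i)"
      unfolding Om_def by (intro Fk_all Fk_compl Mt_F) auto
    have "Gi N i = {\<omega> \<in> Om. \<forall>s\<in>{..<t i}. \<omega> \<in> Om - {\<omega> \<in> Om. \<omega> !! s \<in> BB}} \<inter> {\<omega> \<in> Om. \<forall>i'\<in>{N..<i}. \<omega> \<in> Om - Mt i'}"
      by (auto simp: Gi_def)
    then show ?thesis using Fk_Int[OF a b] by simp
  qed
  have Fs: "Y \<in> sets (P \<mu>)" if "Y \<in> Fk M k" for Y k using that Fk_sets PM by auto
  have Mts: "Mt i \<in> sets (P \<mu>)" for i using scyl_sets[OF L(2)] PM by (simp add: Mt_def)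
  have Ds: "D N i \<in> sets (P \<mu>)" for N i using Fs[OF G_F] Mts by (simp add: D_def sets.Int)
  have Hs: "H N \<in> sets (P \<mu>)" for N using Ds by (auto simp: H_def)
  have Es: "E \<in> sets (P \<mu>)" using E_sets PM by simp
  have keyD: "measure (P \<mu>) (E \<inter> D N i) \<le> (1 - q) * measure (P \<mu>) (D N i)" for N i
    using key[OF mu G_F j] by (simp add: D_def Mt_def L_def q_def)
  have disj: "disjoint_family (\<lambda>k. D N (N + k))" for N
  proof (unfold disjoint_family_on_def, intro ballI impI)
    fix a b :: nat assume "a \<noteq> b"
    then consider "a < b" | "b < a" by linarith
    then show "D N (N + a) \<inter> D N (N + b) = {}"
    proof cases
      case 1 then show ?thesis by (auto simp: D_def Gi_def)
    next
      case 2 then show ?thesis by (auto simp: D_def Gi_def)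
    qed
  qed
  have HE: "measure (P \<mu>) (E \<inter> H N) \<le> (1 - q) * measure (P \<mu>) (H N)" for N
  proof -
    have s1: "(\<lambda>k. measure (P \<mu>) (D N (N + k))) sums measure (P \<mu>) (H N)"
      unfolding H_def using Ds disj by (intro PP.finite_measure_UNION) auto
    have s2: "(\<lambda>k. measure (P \<mu>) (E \<inter> D N (N + k))) sums measure (P \<mu>) (E \<inter> H N)"
    proof -
      have "(\<lambda>k. measure (P \<mu>) (E \<inter> D N (N + k))) sums measure (P \<mu>) (\<Union>k. E \<inter> D N (N + k))"
      proof (rule PP.finite_measure_UNION)
        show "range (\<lambda>k. E \<inter> D N (N + k)) \<subseteq> PP.events" using Ds Es by auto
        show "disjoint_family (\<lambda>k. E \<inter> D N (N + k))"
          using disj[of N] unfolding disjoint_family_on_def by blast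
      qed
      moreover have "(\<Union>k. E \<inter> D N (N + k)) = E \<inter> H N" by (auto simp: H_def)
      ultimately show ?thesis by simp
    qed
    show ?thesis using sums_le[OF keyD s2 sums_mult[OF s1]] .
  qed
  have cover: "E \<inter> Ir j r \<subseteq> H N" for N
  proof
    fix \<omega> assume w: "\<omega> \<in> E \<inter> Ir j r"
    then obtain i where i: "i \<ge> N" "\<omega> \<in> Mt i" by (auto simp: Ir_def Mt_def t_def L_def Lnn_def)
    define i0 where "i0 = (LEAST i. N \<le> i \<and> \<omega> \<in> Mt i)"
    have i0: "N \<le> i0" "\<omega> \<in> Mt i0" using LeastI[of "\<lambda>i. N \<le> i \<and> \<omega> \<in> Mt i", OF conjI[OF i]] by (auto simp: i0_def)
    have nm: "\<omega> \<notin> Mt i'" if "i' \<in> {N..<i0}" for i'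
      using not_less_Least[of i' "\<lambda>i. N \<le> i \<and> \<omega> \<in> Mt i"] that by (auto simp: i0_def)
    have "\<omega> \<in> D N i0" using w E_D[of \<omega>] i0 nm by (auto simp: D_def Gi_def Om_def BB_def)
    then have "\<omega> \<in> D N (N + (i0 - N))" using i0 by simp
    then show "\<omega> \<in> H N" unfolding H_def by blast
  qed
  have dec: "decseq H"
  proof (rule decseq_SucI)
    fix N show "H (Suc N) \<subseteq> H N"
    proof
      fix \<omega> assume "\<omega> \<in> H (Suc N)"
      then obtain k where w: "\<omega> \<in> D (Suc N) (Suc N + k)" by (auto simp: H_def)
      show "\<omega> \<in> H N"
      proof (cases "\<omega> \<in> Mt N")
        case True
        have "t N \<le> t (Suc N + k)" by (simp add: t_def algebra_simps)
        then have "\<omega> \<in> D N (N + 0)" using w True by (auto simp: D_def Gi_def)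
        then show ?thesis unfolding H_def by blast
      next
        case False
        have nm: "\<omega> \<notin> Mt i'" if "i' \<in> {N..<N + Suc k}" for i'
        proof (cases "i' = N")
          case True then show ?thesis using False by simp
        next
          case F2: False then have "i' \<in> {Suc N..<Suc N + k}" using that by auto
          then show ?thesis using w by (auto simp: D_def Gi_def)
        qed
        have "\<omega> \<in> D N (N + Suc k)" using w nm by (auto simp: D_def Gi_def)
        then show ?thesis unfolding H_def by blast
      qed
    qed
  qed
  have inter: "(\<Inter>N. H N) \<subseteq> E \<inter> Ir j r"
  proof
    fix \<omega> assume w: "\<omega> \<in> (\<Inter>N. H N)"
    have hn: "\<exists>k. \<omega> \<in> D N (N + k)" for N using w by (auto simp: H_def)
    have om: "\<omega> \<in> Om" using hn[of 0] by (auto simp: D_def Gi_def)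
    have nb: "\<omega> !! s \<notin> BB" for s
    proof -
      obtain k where k: "\<omega> \<in> D (Suc s) (Suc s + k)" using hn by blast
      have "(Suc s + k) * 1 \<le> (Suc s + k) * Lnn" using Lnn by (intro mult_le_mono2)
      then have "s < t (Suc s + k)" by (simp add: t_def)
      then show ?thesis using k by (auto simp: D_def Gi_def)
    qed
    have "\<omega> \<in> E" using om nb by (auto simp: E_def Ev_def Om_def BB_def)
    moreover have "\<omega> \<in> Ir j r"
    proof -
      have "\<exists>i\<ge>N. \<omega> \<in> scyl M (r + i * length (A j)) (A j)" for N
      proof -
        obtain k where "\<omega> \<in> D N (N + k)" using hn[of N] by blast
        then have "\<omega> \<in> scyl M (r + (N + k) * length (A j)) (A j)" by (simp add: D_def Mt_def t_def Lnn_def L_def)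
        then show ?thesis by (intro exI[of _ "N + k"]) simp
      qed
      then show ?thesis using om by (auto simp: Ir_def Om_def)
    qed
    ultimately show "\<omega> \<in> E \<inter> Ir j r" by blast
  qed
  define x where "x = measure (P \<mu>) (E \<inter> Ir j r)"
  have hN: "x \<le> (1 - q) * measure (P \<mu>) (H N)" for N
  proof -
    have "x \<le> measure (P \<mu>) (E \<inter> H N)" unfolding x_def using cover[of N] Es Hs
      by (intro PP.finite_measure_mono) auto
    then show ?thesis using HE[of N] by linarith
  qed
  have lim: "(\<lambda>N. measure (P \<mu>) (H N)) \<longlonglongrightarrow> measure (P \<mu>) (\<Inter>N. H N)"
    using Hs dec by (intro PP.finite_Lim_measure_decseq) auto
  have "x \<le> (1 - q) * measure (P \<mu>) (\<Inter>N. H N)"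
    using hN by (intro LIMSEQ_le_const[OF tendsto_mult_left[OF lim]]) auto
  also have "\<dots> \<le> (1 - q) * x"
  proof -
    have Irs: "E \<inter> Ir j r \<in> sets (P \<mu>)"
    proof -
      have "(\<Inter>N. H N) \<in> sets (P \<mu>)" using Hs by auto
      have [measurable]: "scyl M k (A j) \<in> sets (stream_space M)" for k using scyl_sets[OF L(2)] by (simp add: L_def)
      have "{\<omega> \<in> space (stream_space M). \<forall>N. \<exists>i\<ge>N. \<omega> \<in> scyl M (r + i * length (A j)) (A j)} \<in> sets (stream_space M)"
        by measurable
      then have IrS: "Ir j r \<in> sets (stream_space M)" unfolding Ir_def space_stream_space[symmetric] .
      have "Ir j r \<in> sets (P \<mu>)" unfolding PM(2) by (rule IrS)
      with Es show ?thesis by (rule sets.Int)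
    qed
    have "measure (P \<mu>) (\<Inter>N. H N) \<le> x" unfolding x_def using inter Irs by (intro PP.finite_measure_mono) auto
    then show ?thesis using q by (intro mult_left_mono) auto
  qed
  finally have "q * x \<le> 0" by (simp add: algebra_simps)
  moreover have "x \<ge> 0" by (simp add: x_def)
  ultimately have "x = 0" using q by (simp add: mult_le_0_iff)
  then show ?thesis by (simp add: x_def)
qed

end


context sts
begin

lemma decisive_sts: "decisive M P B"
  unfolding decisive_def
proof
  fix \<mu> assume mu: "\<mu> \<in> Dist M"
  note PM = Pmu[OF mu]
  interpret PP: prob_space "P \<mu>" by (rule PM(1))
  define Om where "Om = streams (space M)"
  define U where "U = (\<Union>j<m. GF M (A j))"
  have mU: "measure (P \<mu>) U = 1" using cond1 mu by (simp add: U_def)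
  have Us: "U \<in> sets (P \<mu>)" using mU measure_notin_sets[of U "P \<mu>"] by fastforce
  have c0: "measure (P \<mu>) (Om - U) = 0"
    using PP.finite_measure_compl[OF Us] mU PP.prob_space PM(3) by (simp add: Om_def)
  have nullU: "Om - U \<in> null_sets (P \<mu>)"
  proof (rule null_setsI)
    show "Om - U \<in> sets (P \<mu>)" using Us PM(3) sets.top[of "P \<mu>"] unfolding Om_def by (metis sets.Diff)
    then show "emeasure (P \<mu>) (Om - U) = 0" using c0 by (simp add: PP.emeasure_eq_measure)
  qed
  define I where "I = (SIGMA j:{..<m}. {..<length (A j)})"
  have fI: "finite I" unfolding I_def by auto
  have nullIr: "E \<inter> Ir j r \<in> null_sets (P \<mu>)" if "(j, r) \<in> I" for j r
  proof -
    have j: "j < m" using that by (auto simp: I_def)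
    have Irs: "E \<inter> Ir j r \<in> sets (P \<mu>)"
    proof -
      have [measurable]: "scyl M k (A j) \<in> sets (stream_space M)" for k using scyl_sets[of "A j" M k] A j by auto
      have "{\<omega> \<in> space (stream_space M). \<forall>N. \<exists>i\<ge>N. \<omega> \<in> scyl M (r + i * length (A j)) (A j)} \<in> sets (stream_space M)"
        by measurable
      then have IrS: "Ir j r \<in> sets (stream_space M)" unfolding Ir_def space_stream_space[symmetric] .
      have "Ir j r \<in> sets (P \<mu>)" unfolding PM(2) by (rule IrS)
      moreover have "E \<in> sets (P \<mu>)" unfolding PM(2) by (rule E_sets)
      ultimately show ?thesis by (intro sets.Int)
    qed
    show ?thesis using Ir_null[OF mu j, of r] Irs by (intro null_setsI) (simp_all add: PP.emeasure_eq_measure)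
  qed
  have nullUI: "(\<Union>jr\<in>I. E \<inter> Ir (fst jr) (snd jr)) \<in> null_sets (P \<mu>)"
    using fI nullIr by (intro null_sets_UN') (auto intro: countable_finite)
  have cover: "E \<subseteq> (Om - U) \<union> (\<Union>jr\<in>I. E \<inter> Ir (fst jr) (snd jr))"
  proof
    fix \<omega> assume w: "\<omega> \<in> E"
    have om: "\<omega> \<in> Om" using E_D[OF w] by (simp add: Om_def)
    show "\<omega> \<in> (Om - U) \<union> (\<Union>jr\<in>I. E \<inter> Ir (fst jr) (snd jr))"
    proof (cases "\<omega> \<in> U")
      case False then show ?thesis using om by auto
    next
      case True
      then obtain j where j: "j < m" "\<omega> \<in> GF M (A j)" by (auto simp: U_def)
      have "\<exists>\<^sub>\<infinity>k. sdrop k \<omega> \<in> cyl M (A j)" using j by (simp add: GF_def)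
      then have "\<forall>N. \<exists>k\<ge>N. sdrop k \<omega> \<in> cyl M (A j)" by (simp add: INFM_nat_le)
      moreover have "sdrop k \<omega> \<in> cyl M (A j) \<Longrightarrow> \<omega> \<in> scyl M k (A j)" for k
        using om scyl_sdrop[of k M "A j"] unfolding Om_def by blast
      ultimately have "\<forall>N. \<exists>k\<ge>N. \<omega> \<in> scyl M k (A j)" by blast
      moreover have "length (A j) > 0" using A j by auto
      ultimately obtain r where r: "r < length (A j)" "\<forall>N. \<exists>i\<ge>N. \<omega> \<in> scyl M (r + i * length (A j)) (A j)"
        using pigeon[of "length (A j)" "\<lambda>k. \<omega> \<in> scyl M k (A j)"] by blast
      have "\<omega> \<in> Ir j r" using om r by (simp add: Ir_def Om_def)
      moreover have "(j, r) \<in> I" using j r by (simp add: I_def)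
      ultimately show ?thesis using w by force
    qed
  qed
  have Es: "E \<in> sets (P \<mu>)" unfolding PM(2) by (rule E_sets)
  have "E \<in> null_sets (P \<mu>)"
    using null_sets_subset[OF null_sets.Un[OF nullU nullUI] Es cover] .
  then have mE: "measure (P \<mu>) E = 0" by (simp add: measure_def null_setsD1)
  have "Ev M B \<union> Ev M (Btilde M P B) = space (P \<mu>) - E"
    using PM(3) by (auto simp: E_def Ev_def)
  then show "measure (P \<mu>) (Ev M B \<union> Ev M (Btilde M P B)) = 1"
    using PP.finite_measure_compl[OF Es] mE PP.prob_space by simp
qed

end

theorem mainTheorem3:
  fixes M :: "'a measure" and \<kappa> :: "'a \<Rightarrow> 'a measure"
    and P :: "'a measure \<Rightarrow> 'a stream measure"
    and B :: "'a set" and m :: nat and A :: "nat \<Rightarrow> 'a set list" and p :: real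
  assumes kernel: "markov_kernel M \<kappa>"
    and path: "\<forall>\<mu> \<in> Dist M. is_path_measure M \<kappa> \<mu> (P \<mu>)"
    and B: "B \<in> sets M"
    and Bt_meas: "Btilde M P B \<in> sets M"
    and m: "m \<ge> 1"
    and A: "\<forall>j < m. A j \<noteq> [] \<and> set (A j) \<subseteq> sets M"
    and p: "p > 0"
    and cond1: "\<forall>\<mu> \<in> Dist M. measure (P \<mu>) (\<Union>j<m. GF M (A j)) = 1"
    and cond2: "\<forall>j < m. \<forall>\<nu> \<in> Dist M.
        measure (P \<nu>) (cyl M (A j)) > 0 \<longrightarrow>
        measure (cond_seq M P \<nu> (A j)) (Btilde M P B) < 1 \<longrightarrow>
        measure (P (cond_set M (cond_seq M P \<nu> (A j)) (space M - Btilde M P B))) (Ev M B) \<ge> p"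
  shows "decisive M P B"
proof -
  interpret sts M \<kappa> P B m A p
    by (rule sts.intro[OF pathsys.intro[OF kernel path] sts_axioms.intro[OF B Bt_meas m A p cond1 cond2]])
  show ?thesis by (rule decisive_sts)
qed


end
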